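(* (1) Let $\mathcal X\subseteq\mathcal C$ be a covariantly finite subcategory closed under extensions and direct summands, and put $\mathcal Y={}^{\perp_1}\mathcal X$. Then for every $C\in\mathcal C$ there is an $\mathbb E$-triangle $X\xrightarrow{x}Y\xrightarrow{y}C\overset{\delta}{\dashrightarrow}$ with $X\in\mathcal X$, $Y\in\mathcal Y$, and $y:Y\to C$ a right $\mathcal Y$-approximation of $C$. (2) Let $\mathcal Y\subseteq\mathcal C$ be a contravariantly finite subcategory closed under extensions and direct summands, and put $\mathcal X=\mathcal Y^{\perp_1}$. Then for every $C\in\mathcal C$ there is an $\mathbb E$-triangle $C\xrightarrow{x}X\xrightarrow{y}Y\overset{\delta}{\dashrightarrow}$ with $X\in\mathcal X$, $Y\in\mathcal Y$, and $x:C\to X$ a left $\mathcal X$-approximation of $C$.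
   Context: $(\mathcal C,\mathbb E,\mathfrak s)$ is an extriangulated category in the sense of Nakaoka–Palu, whose underlying additive category is Krull–Schmidt, and which has enough projectives and enough injectives (projective $P$: $\mathbb E(P,-)=0$; injective $I$: $\mathbb E(-,I)=0$). All subcategories are full additive subcategories closed under isomorphisms. A subcategory is closed under extensions if for every $\mathbb E$-triangle $A\to B\to C\dashrightarrow$ with $A,C$ in it, $B$ is in it. For a subcategory $\mathcal X$, ${}^{\perp_1}\mathcal X=\{Y\in\mathcal C:\mathbb E(Y,X)=0\ \forall X\in\mathcal X\}$ and $\mathcal X^{\perp_1}=\{Y\in\mathcal C:\mathbb E(X,Y)=0\ \forall X\in\mathcal X\}$. *)

theory Defs
  imports Main
begin

(* Data of an extriangulated category (Nakaoka--Palu), encoded with explicit carriers.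
   Ob: objects; Hom A B: morphisms A -> B; cmp g f = g o f; idm A: identity;
   madd/mzero/mneg: abelian group structure on each Hom A B;
   Ext C A = E(C,A); eadd/ezero/eneg: abelian group structure on each E(C,A);
   push a d = a_* d  (a : A -> A', d in E(C,A));  pull c d = c^* d  (c : C' -> C, d in E(C,A));
   etri A B C x y d : "A -x-> B -y-> C -d->" is an E-triangle, i.e. s(d) = [A -x-> B -y-> C]. *)
record ('o, 'm, 'e) extri =
  Ob :: "'o set"
  Hom :: "'o \<Rightarrow> 'o \<Rightarrow> 'm set"
  cmp :: "'m \<Rightarrow> 'm \<Rightarrow> 'm"
  idm :: "'o \<Rightarrow> 'm"
  madd :: "'m \<Rightarrow> 'm \<Rightarrow> 'm"
  mzero :: "'o \<Rightarrow> 'o \<Rightarrow> 'm"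
  mneg :: "'m \<Rightarrow> 'm"
  Ext :: "'o \<Rightarrow> 'o \<Rightarrow> 'e set"
  eadd :: "'e \<Rightarrow> 'e \<Rightarrow> 'e"
  ezero :: "'o \<Rightarrow> 'o \<Rightarrow> 'e"
  eneg :: "'e \<Rightarrow> 'e"
  push :: "'m \<Rightarrow> 'e \<Rightarrow> 'e"
  pull :: "'m \<Rightarrow> 'e \<Rightarrow> 'e"
  etri :: "'o \<Rightarrow> 'o \<Rightarrow> 'o \<Rightarrow> 'm \<Rightarrow> 'm \<Rightarrow> 'e \<Rightarrow> bool"

definition ab_grp :: "'a set \<Rightarrow> ('a \<Rightarrow> 'a \<Rightarrow> 'a) \<Rightarrow> 'a \<Rightarrow> ('a \<Rightarrow> 'a) \<Rightarrow> bool" where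
  "ab_grp S p z n \<longleftrightarrow> z \<in> S \<and> (\<forall>x\<in>S. \<forall>y\<in>S. p x y \<in> S)
     \<and> (\<forall>x\<in>S. \<forall>y\<in>S. \<forall>w\<in>S. p (p x y) w = p x (p y w))
     \<and> (\<forall>x\<in>S. \<forall>y\<in>S. p x y = p y x)
     \<and> (\<forall>x\<in>S. p z x = x)
     \<and> (\<forall>x\<in>S. n x \<in> S \<and> p (n x) x = z)"

definition preadditive :: "('o, 'm, 'e) extri \<Rightarrow> bool" where
  "preadditive K \<longleftrightarrow>
     (\<forall>A\<in>Ob K. \<forall>B\<in>Ob K. \<forall>C\<in>Ob K. \<forall>f\<in>Hom K A B. \<forall>g\<in>Hom K B C. cmp K g f \<in> Hom K A C)
   \<and> (\<forall>A\<in>Ob K. idm K A \<in> Hom K A A)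
   \<and> (\<forall>A\<in>Ob K. \<forall>B\<in>Ob K. \<forall>f\<in>Hom K A B. cmp K f (idm K A) = f \<and> cmp K (idm K B) f = f)
   \<and> (\<forall>A\<in>Ob K. \<forall>B\<in>Ob K. \<forall>C\<in>Ob K. \<forall>D\<in>Ob K. \<forall>f\<in>Hom K A B. \<forall>g\<in>Hom K B C. \<forall>h\<in>Hom K C D.
        cmp K h (cmp K g f) = cmp K (cmp K h g) f)
   \<and> (\<forall>A\<in>Ob K. \<forall>B\<in>Ob K. ab_grp (Hom K A B) (madd K) (mzero K A B) (mneg K))
   \<and> (\<forall>A\<in>Ob K. \<forall>B\<in>Ob K. \<forall>C\<in>Ob K. \<forall>f\<in>Hom K A B. \<forall>f'\<in>Hom K A B. \<forall>g\<in>Hom K B C.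
        cmp K g (madd K f f') = madd K (cmp K g f) (cmp K g f'))
   \<and> (\<forall>A\<in>Ob K. \<forall>B\<in>Ob K. \<forall>C\<in>Ob K. \<forall>f\<in>Hom K A B. \<forall>g\<in>Hom K B C. \<forall>g'\<in>Hom K B C.
        cmp K (madd K g g') f = madd K (cmp K g f) (cmp K g' f))"

definition is_zero_obj :: "('o, 'm, 'e) extri \<Rightarrow> 'o \<Rightarrow> bool" where
  "is_zero_obj K Z \<longleftrightarrow> Z \<in> Ob K \<and>
     (\<forall>A\<in>Ob K. Hom K Z A = {mzero K Z A} \<and> Hom K A Z = {mzero K A Z})"

definition is_biprod :: "('o, 'm, 'e) extri \<Rightarrow> 'o \<Rightarrow> 'o \<Rightarrow> 'o \<Rightarrow> 'm \<Rightarrow> 'm \<Rightarrow> 'm \<Rightarrow> 'm \<Rightarrow> bool" where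
  "is_biprod K A B S i1 i2 p1 p2 \<longleftrightarrow> A \<in> Ob K \<and> B \<in> Ob K \<and> S \<in> Ob K
     \<and> i1 \<in> Hom K A S \<and> i2 \<in> Hom K B S \<and> p1 \<in> Hom K S A \<and> p2 \<in> Hom K S B
     \<and> cmp K p1 i1 = idm K A \<and> cmp K p2 i2 = idm K B
     \<and> cmp K p2 i1 = mzero K A B \<and> cmp K p1 i2 = mzero K B A
     \<and> madd K (cmp K i1 p1) (cmp K i2 p2) = idm K S"

definition additive :: "('o, 'm, 'e) extri \<Rightarrow> bool" where
  "additive K \<longleftrightarrow> preadditive K \<and> (\<exists>Z. is_zero_obj K Z)
     \<and> (\<forall>A\<in>Ob K. \<forall>B\<in>Ob K. \<exists>S i1 i2 p1 p2. is_biprod K A B S i1 i2 p1 p2)"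

definition iso :: "('o, 'm, 'e) extri \<Rightarrow> 'o \<Rightarrow> 'o \<Rightarrow> 'm \<Rightarrow> bool" where
  "iso K A B f \<longleftrightarrow> A \<in> Ob K \<and> B \<in> Ob K \<and> f \<in> Hom K A B \<and>
     (\<exists>g\<in>Hom K B A. cmp K g f = idm K A \<and> cmp K f g = idm K B)"

definition biadditive_E :: "('o, 'm, 'e) extri \<Rightarrow> bool" where
  "biadditive_E K \<longleftrightarrow>
     (\<forall>C\<in>Ob K. \<forall>A\<in>Ob K. ab_grp (Ext K C A) (eadd K) (ezero K C A) (eneg K))
   \<and> (\<forall>C\<in>Ob K. \<forall>A\<in>Ob K. \<forall>A'\<in>Ob K. \<forall>a\<in>Hom K A A'. \<forall>d\<in>Ext K C A. push K a d \<in> Ext K C A')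
   \<and> (\<forall>C\<in>Ob K. \<forall>C'\<in>Ob K. \<forall>A\<in>Ob K. \<forall>c\<in>Hom K C' C. \<forall>d\<in>Ext K C A. pull K c d \<in> Ext K C' A)
   \<and> (\<forall>C\<in>Ob K. \<forall>A\<in>Ob K. \<forall>d\<in>Ext K C A. push K (idm K A) d = d \<and> pull K (idm K C) d = d)
   \<and> (\<forall>C\<in>Ob K. \<forall>A\<in>Ob K. \<forall>A'\<in>Ob K. \<forall>A''\<in>Ob K. \<forall>a\<in>Hom K A A'. \<forall>a'\<in>Hom K A' A''. \<forall>d\<in>Ext K C A.
        push K (cmp K a' a) d = push K a' (push K a d))
   \<and> (\<forall>C\<in>Ob K. \<forall>C'\<in>Ob K. \<forall>C''\<in>Ob K. \<forall>A\<in>Ob K. \<forall>c\<in>Hom K C' C. \<forall>c'\<in>Hom K C'' C'. \<forall>d\<in>Ext K C A.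
        pull K (cmp K c c') d = pull K c' (pull K c d))
   \<and> (\<forall>C\<in>Ob K. \<forall>C'\<in>Ob K. \<forall>A\<in>Ob K. \<forall>A'\<in>Ob K. \<forall>a\<in>Hom K A A'. \<forall>c\<in>Hom K C' C. \<forall>d\<in>Ext K C A.
        push K a (pull K c d) = pull K c (push K a d))
   \<and> (\<forall>C\<in>Ob K. \<forall>A\<in>Ob K. \<forall>A'\<in>Ob K. \<forall>a\<in>Hom K A A'. \<forall>d\<in>Ext K C A. \<forall>d'\<in>Ext K C A.
        push K a (eadd K d d') = eadd K (push K a d) (push K a d'))
   \<and> (\<forall>C\<in>Ob K. \<forall>A\<in>Ob K. \<forall>A'\<in>Ob K. \<forall>a\<in>Hom K A A'. \<forall>a'\<in>Hom K A A'. \<forall>d\<in>Ext K C A.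
        push K (madd K a a') d = eadd K (push K a d) (push K a' d))
   \<and> (\<forall>C\<in>Ob K. \<forall>C'\<in>Ob K. \<forall>A\<in>Ob K. \<forall>c\<in>Hom K C' C. \<forall>d\<in>Ext K C A. \<forall>d'\<in>Ext K C A.
        pull K c (eadd K d d') = eadd K (pull K c d) (pull K c d'))
   \<and> (\<forall>C\<in>Ob K. \<forall>C'\<in>Ob K. \<forall>A\<in>Ob K. \<forall>c\<in>Hom K C' C. \<forall>c'\<in>Hom K C' C. \<forall>d\<in>Ext K C A.
        pull K (madd K c c') d = eadd K (pull K c d) (pull K c' d))"

definition realization :: "('o, 'm, 'e) extri \<Rightarrow> bool" where
  "realization K \<longleftrightarrow>
     (\<forall>A B C x y d. etri K A B C x y d \<longrightarrow> A \<in> Ob K \<and> B \<in> Ob K \<and> C \<in> Ob K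
        \<and> x \<in> Hom K A B \<and> y \<in> Hom K B C \<and> d \<in> Ext K C A)
   \<and> (\<forall>A\<in>Ob K. \<forall>C\<in>Ob K. \<forall>d\<in>Ext K C A. \<exists>B x y. etri K A B C x y d)
   \<comment> \<open>s(d) is exactly one equivalence class of sequences\<close>
   \<and> (\<forall>A B C x y d B' x' y'. etri K A B C x y d \<longrightarrow>
        (etri K A B' C x' y' d \<longleftrightarrow> B' \<in> Ob K \<and> x' \<in> Hom K A B' \<and> y' \<in> Hom K B' C \<and>
            (\<exists>b. iso K B B' b \<and> cmp K b x = x' \<and> cmp K y' b = y)))
   \<comment> \<open>realization condition for morphisms of extensions\<close>
   \<and> (\<forall>A B C x y d A' B' C' x' y' d' a c. etri K A B C x y d \<longrightarrow> etri K A' B' C' x' y' d'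
        \<longrightarrow> a \<in> Hom K A A' \<longrightarrow> c \<in> Hom K C C' \<longrightarrow> push K a d = pull K c d' \<longrightarrow>
        (\<exists>b\<in>Hom K B B'. cmp K b x = cmp K x' a \<and> cmp K y' b = cmp K c y))
   \<comment> \<open>additivity: s(0) = 0\<close>
   \<and> (\<forall>A C S i1 i2 p1 p2. is_biprod K A C S i1 i2 p1 p2 \<longrightarrow> etri K A S C i1 p2 (ezero K C A))
   \<comment> \<open>additivity: s(d \<oplus> d') = s(d) \<oplus> s(d')\<close>
   \<and> (\<forall>A B C x y d A' B' C' x' y' d'
        AA iA iA' pA pA' BB iB iB' pB pB' CC iC iC' pC pC'.
        etri K A B C x y d \<longrightarrow> etri K A' B' C' x' y' d' \<longrightarrow>
        is_biprod K A A' AA iA iA' pA pA' \<longrightarrow> is_biprod K B B' BB iB iB' pB pB' \<longrightarrow>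
        is_biprod K C C' CC iC iC' pC pC' \<longrightarrow>
        etri K AA BB CC
          (madd K (cmp K iB (cmp K x pA)) (cmp K iB' (cmp K x' pA')))
          (madd K (cmp K iC (cmp K y pB)) (cmp K iC' (cmp K y' pB')))
          (eadd K (push K iA (pull K pC d)) (push K iA' (pull K pC' d'))))"

definition ET3 :: "('o, 'm, 'e) extri \<Rightarrow> bool" where
  "ET3 K \<longleftrightarrow> (\<forall>A B C x y d A' B' C' x' y' d' a b. etri K A B C x y d \<longrightarrow> etri K A' B' C' x' y' d'
        \<longrightarrow> a \<in> Hom K A A' \<longrightarrow> b \<in> Hom K B B' \<longrightarrow> cmp K b x = cmp K x' a \<longrightarrow>
        (\<exists>c\<in>Hom K C C'. cmp K c y = cmp K y' b \<and> push K a d = pull K c d'))"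

definition ET3op :: "('o, 'm, 'e) extri \<Rightarrow> bool" where
  "ET3op K \<longleftrightarrow> (\<forall>A B C x y d A' B' C' x' y' d' b c. etri K A B C x y d \<longrightarrow> etri K A' B' C' x' y' d'
        \<longrightarrow> b \<in> Hom K B B' \<longrightarrow> c \<in> Hom K C C' \<longrightarrow> cmp K c y = cmp K y' b \<longrightarrow>
        (\<exists>a\<in>Hom K A A'. cmp K x' a = cmp K b x \<and> push K a d = pull K c d'))"

definition ET4 :: "('o, 'm, 'e) extri \<Rightarrow> bool" where
  "ET4 K \<longleftrightarrow> (\<forall>A B C D F f f' g g' d d'.
        etri K A B D f f' d \<longrightarrow> etri K B C F g g' d' \<longrightarrow>
        (\<exists>E h h' dd e d''. E \<in> Ob K \<and> h \<in> Hom K A C \<and> h' \<in> Hom K C E \<and> dd \<in> Hom K D E \<and> e \<in> Hom K E F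
           \<and> h = cmp K g f \<and> cmp K h' g = cmp K dd f' \<and> cmp K e h' = g'
           \<and> etri K A C E h h' d''
           \<and> etri K D E F dd e (push K f' d')
           \<and> pull K dd d'' = d
           \<and> push K f d'' = pull K e d'))"

definition ET4op :: "('o, 'm, 'e) extri \<Rightarrow> bool" where
  "ET4op K \<longleftrightarrow> (\<forall>A B C D F f f' g g' d d'.
        etri K D A B f' f d \<longrightarrow> etri K F B C g' g d' \<longrightarrow>
        (\<exists>E h h' dd e d''. E \<in> Ob K \<and> h \<in> Hom K A C \<and> h' \<in> Hom K E A \<and> dd \<in> Hom K D E \<and> e \<in> Hom K E F
           \<and> cmp K h' dd = f' \<and> cmp K f h' = cmp K g' e \<and> h = cmp K g f
           \<and> etri K E A C h' h d''
           \<and> etri K D E F dd e (pull K g' d)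
           \<and> d' = push K e d''
           \<and> push K dd d = pull K g d''))"

definition extriangulated :: "('o, 'm, 'e) extri \<Rightarrow> bool" where
  "extriangulated K \<longleftrightarrow> additive K \<and> biadditive_E K \<and> realization K
     \<and> ET3 K \<and> ET3op K \<and> ET4 K \<and> ET4op K"

definition msum :: "('o, 'm, 'e) extri \<Rightarrow> 'o \<Rightarrow> 'o \<Rightarrow> 'm list \<Rightarrow> 'm" where
  "msum K A B fs = foldr (madd K) fs (mzero K A B)"

definition dsum_decomp :: "('o, 'm, 'e) extri \<Rightarrow> 'o \<Rightarrow> nat \<Rightarrow> (nat \<Rightarrow> 'o) \<Rightarrow> (nat \<Rightarrow> 'm) \<Rightarrow> (nat \<Rightarrow> 'm) \<Rightarrow> bool" where
  "dsum_decomp K A n Bs incl prj \<longleftrightarrow> A \<in> Ob K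
     \<and> (\<forall>i<n. Bs i \<in> Ob K \<and> incl i \<in> Hom K (Bs i) A \<and> prj i \<in> Hom K A (Bs i))
     \<and> (\<forall>i<n. \<forall>j<n. cmp K (prj i) (incl j) = (if i = j then idm K (Bs i) else mzero K (Bs j) (Bs i)))
     \<and> msum K A A (map (\<lambda>i. cmp K (incl i) (prj i)) [0..<n]) = idm K A"

definition local_obj :: "('o, 'm, 'e) extri \<Rightarrow> 'o \<Rightarrow> bool" where
  "local_obj K A \<longleftrightarrow> A \<in> Ob K \<and> idm K A \<noteq> mzero K A A \<and>
     (\<forall>f\<in>Hom K A A. iso K A A f \<or> iso K A A (madd K (idm K A) (mneg K f)))"

definition krull_schmidt :: "('o, 'm, 'e) extri \<Rightarrow> bool" where
  "krull_schmidt K \<longleftrightarrow> (\<forall>A\<in>Ob K. \<exists>n Bs incl prj. dsum_decomp K A n Bs incl prj \<and> (\<forall>i<n. local_obj K (Bs i)))"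

definition projective :: "('o, 'm, 'e) extri \<Rightarrow> 'o \<Rightarrow> bool" where
  "projective K P \<longleftrightarrow> P \<in> Ob K \<and> (\<forall>A\<in>Ob K. Ext K P A = {ezero K P A})"

definition injective :: "('o, 'm, 'e) extri \<Rightarrow> 'o \<Rightarrow> bool" where
  "injective K I \<longleftrightarrow> I \<in> Ob K \<and> (\<forall>A\<in>Ob K. Ext K A I = {ezero K A I})"

definition enough_proj :: "('o, 'm, 'e) extri \<Rightarrow> bool" where
  "enough_proj K \<longleftrightarrow> (\<forall>C\<in>Ob K. \<exists>A P x y d. etri K A P C x y d \<and> projective K P)"

definition enough_inj :: "('o, 'm, 'e) extri \<Rightarrow> bool" where
  "enough_inj K \<longleftrightarrow> (\<forall>A\<in>Ob K. \<exists>I C x y d. etri K A I C x y d \<and> injective K I)"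

(* full additive subcategory closed under isomorphisms (given by its class of objects) *)
definition subcat :: "('o, 'm, 'e) extri \<Rightarrow> 'o set \<Rightarrow> bool" where
  "subcat K S \<longleftrightarrow> S \<subseteq> Ob K
     \<and> (\<forall>A B f. A \<in> S \<longrightarrow> iso K A B f \<longrightarrow> B \<in> S)
     \<and> (\<forall>Z. is_zero_obj K Z \<longrightarrow> Z \<in> S)
     \<and> (\<forall>A B T i1 i2 p1 p2. A \<in> S \<longrightarrow> B \<in> S \<longrightarrow> is_biprod K A B T i1 i2 p1 p2 \<longrightarrow> T \<in> S)"

definition ext_closed :: "('o, 'm, 'e) extri \<Rightarrow> 'o set \<Rightarrow> bool" where
  "ext_closed K S \<longleftrightarrow> (\<forall>A B C x y d. etri K A B C x y d \<longrightarrow> A \<in> S \<longrightarrow> C \<in> S \<longrightarrow> B \<in> S)"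

definition summand_closed :: "('o, 'm, 'e) extri \<Rightarrow> 'o set \<Rightarrow> bool" where
  "summand_closed K S \<longleftrightarrow> (\<forall>A B T i1 i2 p1 p2. is_biprod K A B T i1 i2 p1 p2 \<longrightarrow> T \<in> S \<longrightarrow> A \<in> S \<and> B \<in> S)"

definition left_approx :: "('o, 'm, 'e) extri \<Rightarrow> 'o set \<Rightarrow> 'o \<Rightarrow> 'o \<Rightarrow> 'm \<Rightarrow> bool" where
  "left_approx K S C X f \<longleftrightarrow> X \<in> S \<and> f \<in> Hom K C X \<and>
     (\<forall>X'\<in>S. \<forall>g\<in>Hom K C X'. \<exists>h\<in>Hom K X X'. cmp K h f = g)"

definition right_approx :: "('o, 'm, 'e) extri \<Rightarrow> 'o set \<Rightarrow> 'o \<Rightarrow> 'o \<Rightarrow> 'm \<Rightarrow> bool" where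
  "right_approx K S C Y f \<longleftrightarrow> Y \<in> S \<and> f \<in> Hom K Y C \<and>
     (\<forall>Y'\<in>S. \<forall>g\<in>Hom K Y' C. \<exists>h\<in>Hom K Y' Y. cmp K f h = g)"

definition cov_finite :: "('o, 'm, 'e) extri \<Rightarrow> 'o set \<Rightarrow> bool" where
  "cov_finite K S \<longleftrightarrow> (\<forall>C\<in>Ob K. \<exists>X f. left_approx K S C X f)"

definition contra_finite :: "('o, 'm, 'e) extri \<Rightarrow> 'o set \<Rightarrow> bool" where
  "contra_finite K S \<longleftrightarrow> (\<forall>C\<in>Ob K. \<exists>Y f. right_approx K S C Y f)"

definition perpL :: "('o, 'm, 'e) extri \<Rightarrow> 'o set \<Rightarrow> 'o set" where
  "perpL K S = {Y \<in> Ob K. \<forall>X\<in>S. Ext K Y X = {ezero K Y X}}"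

definition perpR :: "('o, 'm, 'e) extri \<Rightarrow> 'o set \<Rightarrow> 'o set" where
  "perpR K S = {Y \<in> Ob K. \<forall>X\<in>S. Ext K X Y = {ezero K X Y}}"

end

theory Submission
  imports Defs
begin

lemma ab_grp_facts:
  assumes "ab_grp S p z n"
  shows "z \<in> S" "\<And>x y. x\<in>S \<Longrightarrow> y\<in>S \<Longrightarrow> p x y \<in> S"
    "\<And>x y w. x\<in>S \<Longrightarrow> y\<in>S \<Longrightarrow> w\<in>S \<Longrightarrow> p (p x y) w = p x (p y w)"
    "\<And>x y. x\<in>S \<Longrightarrow> y\<in>S \<Longrightarrow> p x y = p y x"
    "\<And>x. x\<in>S \<Longrightarrow> p z x = x" "\<And>x. x\<in>S \<Longrightarrow> p x z = x"
    "\<And>x. x\<in>S \<Longrightarrow> n x \<in> S" "\<And>x. x\<in>S \<Longrightarrow> p (n x) x = z"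
    "\<And>x. x\<in>S \<Longrightarrow> p x (n x) = z"
  using assms unfolding ab_grp_def by metis+

lemma ab_grp_cancel:
  assumes "ab_grp S p z n" "x\<in>S" "y\<in>S" "w\<in>S" "p x y = p x w" shows "y = w"
proof -
  have "p (n x) (p x y) = p (n x) (p x w)" using assms by simp
  then show ?thesis using ab_grp_facts[OF assms(1)] assms(2-4) by metis
qed

lemma ab_grp_idem:
  assumes "ab_grp S p z n" "x\<in>S" "p x x = x" shows "x = z"
  using ab_grp_cancel[OF assms(1) assms(2) assms(2), of z] ab_grp_facts[OF assms(1)] assms by metis

lemma ab_grp_cancel_r:
  assumes "ab_grp S p z n" "x\<in>S" "y\<in>S" "p x y = y" shows "x = z"
  using ab_grp_cancel[OF assms(1) assms(3) assms(2), of z] ab_grp_facts[OF assms(1)] assms by metis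


locale gc =
  fixes K :: "('o, 'm, 'e) extri"
  assumes pre: "preadditive K"
    and zex: "\<exists>Z. is_zero_obj K Z"
    and bipx: "\<forall>A\<in>Ob K. \<forall>B\<in>Ob K. \<exists>S i1 i2 p1 p2. is_biprod K A B S i1 i2 p1 p2"
    and bia: "biadditive_E K"
    and R1: "\<And>A B C x y d. etri K A B C x y d \<Longrightarrow> A \<in> Ob K \<and> B \<in> Ob K \<and> C \<in> Ob K
        \<and> x \<in> Hom K A B \<and> y \<in> Hom K B C \<and> d \<in> Ext K C A"
    and R2: "\<And>A C d. A\<in>Ob K \<Longrightarrow> C\<in>Ob K \<Longrightarrow> d\<in>Ext K C A \<Longrightarrow> \<exists>B x y. etri K A B C x y d"
    and R4: "\<And>A B C x y d A' B' C' x' y' d' a c. etri K A B C x y d \<Longrightarrow> etri K A' B' C' x' y' d'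
        \<Longrightarrow> a \<in> Hom K A A' \<Longrightarrow> c \<in> Hom K C C' \<Longrightarrow> push K a d = pull K c d' \<Longrightarrow>
        (\<exists>b\<in>Hom K B B'. cmp K b x = cmp K x' a \<and> cmp K y' b = cmp K c y)"
    and R5: "\<And>A C S i1 i2 p1 p2. is_biprod K A C S i1 i2 p1 p2 \<Longrightarrow> etri K A S C i1 p2 (ezero K C A)"
    and et3op: "ET3op K"
    and et4op: "ET4op K"
begin

abbreviation "ob A \<equiv> A \<in> Ob K"

lemma comp: "ob A \<Longrightarrow> ob B \<Longrightarrow> ob C \<Longrightarrow> f \<in> Hom K A B \<Longrightarrow> g \<in> Hom K B C \<Longrightarrow> cmp K g f \<in> Hom K A C"
  using pre[unfolded preadditive_def, THEN conjunct1] by blast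
lemma idin: "ob A \<Longrightarrow> idm K A \<in> Hom K A A"
  using pre[unfolded preadditive_def, THEN conjunct2, THEN conjunct1] by blast
lemma idl: "ob A \<Longrightarrow> ob B \<Longrightarrow> f \<in> Hom K A B \<Longrightarrow> cmp K (idm K B) f = f"
  using pre[unfolded preadditive_def, THEN conjunct2, THEN conjunct2, THEN conjunct1] by blast
lemma idr: "ob A \<Longrightarrow> ob B \<Longrightarrow> f \<in> Hom K A B \<Longrightarrow> cmp K f (idm K A) = f"
  using pre[unfolded preadditive_def, THEN conjunct2, THEN conjunct2, THEN conjunct1] by blast
lemma assoc: "ob A \<Longrightarrow> ob B \<Longrightarrow> ob C \<Longrightarrow> ob D \<Longrightarrow> f \<in> Hom K A B \<Longrightarrow> g \<in> Hom K B C \<Longrightarrow> h \<in> Hom K C D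
  \<Longrightarrow> cmp K h (cmp K g f) = cmp K (cmp K h g) f"
  using pre[unfolded preadditive_def, THEN conjunct2, THEN conjunct2, THEN conjunct2, THEN conjunct1] by blast
lemma hg: "ob A \<Longrightarrow> ob B \<Longrightarrow> ab_grp (Hom K A B) (madd K) (mzero K A B) (mneg K)"
  using pre[unfolded preadditive_def, THEN conjunct2, THEN conjunct2, THEN conjunct2, THEN conjunct2, THEN conjunct1] by blast
lemma distl: "ob A \<Longrightarrow> ob B \<Longrightarrow> ob C \<Longrightarrow> f \<in> Hom K A B \<Longrightarrow> f' \<in> Hom K A B \<Longrightarrow> g \<in> Hom K B C \<Longrightarrow>
  cmp K g (madd K f f') = madd K (cmp K g f) (cmp K g f')"
  using pre[unfolded preadditive_def, THEN conjunct2, THEN conjunct2, THEN conjunct2, THEN conjunct2, THEN conjunct2, THEN conjunct1] by blast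
lemma distr: "ob A \<Longrightarrow> ob B \<Longrightarrow> ob C \<Longrightarrow> f \<in> Hom K A B \<Longrightarrow> g \<in> Hom K B C \<Longrightarrow> g' \<in> Hom K B C \<Longrightarrow>
  cmp K (madd K g g') f = madd K (cmp K g f) (cmp K g' f)"
  using pre[unfolded preadditive_def, THEN conjunct2, THEN conjunct2, THEN conjunct2, THEN conjunct2, THEN conjunct2, THEN conjunct2] by blast

lemmas hgf = ab_grp_facts[OF hg]

lemma madd_in: "ob A \<Longrightarrow> ob B \<Longrightarrow> f \<in> Hom K A B \<Longrightarrow> g \<in> Hom K A B \<Longrightarrow> madd K f g \<in> Hom K A B"
  using hgf(2) by blast
lemma mzero_in: "ob A \<Longrightarrow> ob B \<Longrightarrow> mzero K A B \<in> Hom K A B"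
  using hgf(1) by blast
lemma mneg_in: "ob A \<Longrightarrow> ob B \<Longrightarrow> f \<in> Hom K A B \<Longrightarrow> mneg K f \<in> Hom K A B"
  using hgf(7) by blast

lemma cmp_zero_r: "ob A \<Longrightarrow> ob B \<Longrightarrow> ob C \<Longrightarrow> g \<in> Hom K B C \<Longrightarrow> cmp K g (mzero K A B) = mzero K A C"
proof -
  assume a: "ob A" "ob B" "ob C" "g \<in> Hom K B C"
  have z: "mzero K A B \<in> Hom K A B" using mzero_in a by blast
  have "cmp K g (madd K (mzero K A B) (mzero K A B)) = madd K (cmp K g (mzero K A B)) (cmp K g (mzero K A B))"
    using distl[OF a(1-3) z z a(4)] .
  moreover have "madd K (mzero K A B) (mzero K A B) = mzero K A B" using hgf(5)[OF a(1,2) z] .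
  ultimately show ?thesis using ab_grp_idem[OF hg[OF a(1,3)]] comp[OF a(1-3) z a(4)] by metis
qed

lemma cmp_zero_l: "ob A \<Longrightarrow> ob B \<Longrightarrow> ob C \<Longrightarrow> f \<in> Hom K A B \<Longrightarrow> cmp K (mzero K B C) f = mzero K A C"
proof -
  assume a: "ob A" "ob B" "ob C" "f \<in> Hom K A B"
  have z: "mzero K B C \<in> Hom K B C" using mzero_in a by blast
  have "cmp K (madd K (mzero K B C) (mzero K B C)) f = madd K (cmp K (mzero K B C) f) (cmp K (mzero K B C) f)"
    using distr[OF a(1-3) a(4) z z] .
  moreover have "madd K (mzero K B C) (mzero K B C) = mzero K B C" using hgf(5)[OF a(2,3) z] .
  ultimately show ?thesis using ab_grp_idem[OF hg[OF a(1,3)]] comp[OF a(1-3) a(4) z] by metis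
qed

lemma eg: "ob C \<Longrightarrow> ob A \<Longrightarrow> ab_grp (Ext K C A) (eadd K) (ezero K C A) (eneg K)"
  using bia[unfolded biadditive_E_def, THEN conjunct1] by blast
lemmas egf = ab_grp_facts[OF eg]
lemma push_in: "ob C \<Longrightarrow> ob A \<Longrightarrow> ob A' \<Longrightarrow> a \<in> Hom K A A' \<Longrightarrow> d \<in> Ext K C A \<Longrightarrow> push K a d \<in> Ext K C A'"
  using bia[unfolded biadditive_E_def, THEN conjunct2, THEN conjunct1] by blast
lemma pull_in: "ob C \<Longrightarrow> ob C' \<Longrightarrow> ob A \<Longrightarrow> c \<in> Hom K C' C \<Longrightarrow> d \<in> Ext K C A \<Longrightarrow> pull K c d \<in> Ext K C' A"
  using bia[unfolded biadditive_E_def, THEN conjunct2, THEN conjunct2, THEN conjunct1] by blast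
lemma push_id: "ob C \<Longrightarrow> ob A \<Longrightarrow> d \<in> Ext K C A \<Longrightarrow> push K (idm K A) d = d"
  using bia[unfolded biadditive_E_def, THEN conjunct2, THEN conjunct2, THEN conjunct2, THEN conjunct1] by blast
lemma pull_id: "ob C \<Longrightarrow> ob A \<Longrightarrow> d \<in> Ext K C A \<Longrightarrow> pull K (idm K C) d = d"
  using bia[unfolded biadditive_E_def, THEN conjunct2, THEN conjunct2, THEN conjunct2, THEN conjunct1] by blast
lemma push_cmp: "ob C \<Longrightarrow> ob A \<Longrightarrow> ob A' \<Longrightarrow> ob A'' \<Longrightarrow> a \<in> Hom K A A' \<Longrightarrow> a' \<in> Hom K A' A'' \<Longrightarrow> d \<in> Ext K C A \<Longrightarrow>
        push K (cmp K a' a) d = push K a' (push K a d)"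
  using bia[unfolded biadditive_E_def, THEN conjunct2, THEN conjunct2, THEN conjunct2, THEN conjunct2, THEN conjunct1] by blast
lemma pull_cmp: "ob C \<Longrightarrow> ob C' \<Longrightarrow> ob C'' \<Longrightarrow> ob A \<Longrightarrow> c \<in> Hom K C' C \<Longrightarrow> c' \<in> Hom K C'' C' \<Longrightarrow> d \<in> Ext K C A \<Longrightarrow>
        pull K (cmp K c c') d = pull K c' (pull K c d)"
  using bia[unfolded biadditive_E_def, THEN conjunct2, THEN conjunct2, THEN conjunct2, THEN conjunct2, THEN conjunct2, THEN conjunct1] by blast
lemma push_pull: "ob C \<Longrightarrow> ob C' \<Longrightarrow> ob A \<Longrightarrow> ob A' \<Longrightarrow> a \<in> Hom K A A' \<Longrightarrow> c \<in> Hom K C' C \<Longrightarrow> d \<in> Ext K C A \<Longrightarrow>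
        push K a (pull K c d) = pull K c (push K a d)"
  using bia[unfolded biadditive_E_def, THEN conjunct2, THEN conjunct2, THEN conjunct2, THEN conjunct2, THEN conjunct2, THEN conjunct2, THEN conjunct1] by blast
lemma push_eadd: "ob C \<Longrightarrow> ob A \<Longrightarrow> ob A' \<Longrightarrow> a \<in> Hom K A A' \<Longrightarrow> d \<in> Ext K C A \<Longrightarrow> d' \<in> Ext K C A \<Longrightarrow>
        push K a (eadd K d d') = eadd K (push K a d) (push K a d')"
  using bia[unfolded biadditive_E_def, THEN conjunct2, THEN conjunct2, THEN conjunct2, THEN conjunct2, THEN conjunct2, THEN conjunct2, THEN conjunct2, THEN conjunct1] by blast
lemma push_madd: "ob C \<Longrightarrow> ob A \<Longrightarrow> ob A' \<Longrightarrow> a \<in> Hom K A A' \<Longrightarrow> a' \<in> Hom K A A' \<Longrightarrow> d \<in> Ext K C A \<Longrightarrow>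
        push K (madd K a a') d = eadd K (push K a d) (push K a' d)"
  using bia[unfolded biadditive_E_def, THEN conjunct2, THEN conjunct2, THEN conjunct2, THEN conjunct2, THEN conjunct2, THEN conjunct2, THEN conjunct2, THEN conjunct2, THEN conjunct1] by blast
lemma pull_eadd: "ob C \<Longrightarrow> ob C' \<Longrightarrow> ob A \<Longrightarrow> c \<in> Hom K C' C \<Longrightarrow> d \<in> Ext K C A \<Longrightarrow> d' \<in> Ext K C A \<Longrightarrow>
        pull K c (eadd K d d') = eadd K (pull K c d) (pull K c d')"
  using bia[unfolded biadditive_E_def, THEN conjunct2, THEN conjunct2, THEN conjunct2, THEN conjunct2, THEN conjunct2, THEN conjunct2, THEN conjunct2, THEN conjunct2, THEN conjunct2, THEN conjunct1] by blast

lemma push_ezero: "ob C \<Longrightarrow> ob A \<Longrightarrow> ob A' \<Longrightarrow> a \<in> Hom K A A' \<Longrightarrow> push K a (ezero K C A) = ezero K C A'"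
proof -
  assume a: "ob C" "ob A" "ob A'" "a \<in> Hom K A A'"
  have z: "ezero K C A \<in> Ext K C A" using egf a by blast
  have "push K a (eadd K (ezero K C A) (ezero K C A)) = eadd K (push K a (ezero K C A)) (push K a (ezero K C A))"
    using push_eadd[OF a z z] .
  moreover have "eadd K (ezero K C A) (ezero K C A) = ezero K C A" using egf(5)[OF a(1,2) z] .
  ultimately show ?thesis using ab_grp_idem[OF eg[OF a(1,3)]] push_in[OF a z] by metis
qed

lemma pull_ezero: "ob C \<Longrightarrow> ob C' \<Longrightarrow> ob A \<Longrightarrow> c \<in> Hom K C' C \<Longrightarrow> pull K c (ezero K C A) = ezero K C' A"
proof -
  assume a: "ob C" "ob C'" "ob A" "c \<in> Hom K C' C"
  have z: "ezero K C A \<in> Ext K C A" using egf a by blast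
  have "pull K c (eadd K (ezero K C A) (ezero K C A)) = eadd K (pull K c (ezero K C A)) (pull K c (ezero K C A))"
    using pull_eadd[OF a z z] .
  moreover have "eadd K (ezero K C A) (ezero K C A) = ezero K C A" using egf(5)[OF a(1,3) z] .
  ultimately show ?thesis using ab_grp_idem[OF eg[OF a(2,3)]] pull_in[OF a z] by metis
qed

lemma push_mzero: "ob C \<Longrightarrow> ob A \<Longrightarrow> ob A' \<Longrightarrow> d \<in> Ext K C A \<Longrightarrow> push K (mzero K A A') d = ezero K C A'"
proof -
  assume a: "ob C" "ob A" "ob A'" "d \<in> Ext K C A"
  have z: "mzero K A A' \<in> Hom K A A'" using mzero_in a by blast
  have "push K (madd K (mzero K A A') (mzero K A A')) d = eadd K (push K (mzero K A A') d) (push K (mzero K A A') d)"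
    using push_madd[OF a(1-3) z z a(4)] .
  moreover have "madd K (mzero K A A') (mzero K A A') = mzero K A A'" using hgf(5)[OF a(2,3) z] .
  ultimately show ?thesis using ab_grp_idem[OF eg[OF a(1,3)]] push_in[OF a(1-3) z a(4)] by metis
qed

definition "Z0 = (SOME Z. is_zero_obj K Z)"
lemma zZ: "is_zero_obj K Z0" unfolding Z0_def using zex someI_ex by metis
lemma obZ: "ob Z0" using zZ unfolding is_zero_obj_def by blast
lemma homZ1: "ob A \<Longrightarrow> Hom K Z0 A = {mzero K Z0 A}" using zZ unfolding is_zero_obj_def by blast
lemma homZ2: "ob A \<Longrightarrow> Hom K A Z0 = {mzero K A Z0}" using zZ unfolding is_zero_obj_def by blast

lemma biprod_Zr: "ob A \<Longrightarrow> is_biprod K A Z0 A (idm K A) (mzero K Z0 A) (idm K A) (mzero K A Z0)"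
proof -
  assume a: "ob A"
  note Z = obZ
  have 1: "cmp K (mzero K A Z0) (mzero K Z0 A) = idm K Z0"
    using comp[OF Z a Z mzero_in[OF Z a] mzero_in[OF a Z]] idin[OF Z] homZ1[OF Z] by (metis singletonD)
  have 2: "cmp K (mzero K Z0 A) (mzero K A Z0) = mzero K A A"
    using cmp_zero_r[OF a Z a mzero_in[OF Z a]] .
  show ?thesis unfolding is_biprod_def
    using a Z idin[OF a] mzero_in[OF Z a] mzero_in[OF a Z] 1 2 idl[OF a a idin[OF a]]
      idr[OF a Z mzero_in[OF a Z]] idl[OF Z a mzero_in[OF Z a]] hgf(6)[OF a a idin[OF a]] by simp
qed

lemma biprod_Zl: "ob A \<Longrightarrow> is_biprod K Z0 A A (mzero K Z0 A) (idm K A) (mzero K A Z0) (idm K A)"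
proof -
  assume a: "ob A"
  note Z = obZ
  have 1: "cmp K (mzero K A Z0) (mzero K Z0 A) = idm K Z0"
    using comp[OF Z a Z mzero_in[OF Z a] mzero_in[OF a Z]] idin[OF Z] homZ1[OF Z] by (metis singletonD)
  have 2: "cmp K (mzero K Z0 A) (mzero K A Z0) = mzero K A A"
    using cmp_zero_r[OF a Z a mzero_in[OF Z a]] .
  show ?thesis unfolding is_biprod_def
    using a Z idin[OF a] mzero_in[OF Z a] mzero_in[OF a Z] 1 2 idl[OF a a idin[OF a]]
      idr[OF a Z mzero_in[OF a Z]] idl[OF Z a mzero_in[OF Z a]] hgf(5)[OF a a idin[OF a]] by simp
qed

lemma triZr: "ob A \<Longrightarrow> etri K A A Z0 (idm K A) (mzero K A Z0) (ezero K Z0 A)"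
  using R5[OF biprod_Zr] .
lemma triZl: "ob A \<Longrightarrow> etri K Z0 A A (mzero K Z0 A) (idm K A) (ezero K A Z0)"
  using R5[OF biprod_Zl] .

end

context gc begin

lemma et3op_r: "etri K A B C x y d \<Longrightarrow> etri K A' B' C' x' y' d' \<Longrightarrow> b \<in> Hom K B B' \<Longrightarrow> c \<in> Hom K C C'
  \<Longrightarrow> cmp K c y = cmp K y' b \<Longrightarrow> (\<exists>a\<in>Hom K A A'. cmp K x' a = cmp K b x \<and> push K a d = pull K c d')"
  using et3op unfolding ET3op_def by blast

lemma lift: assumes t: "etri K A B C x y d" and W: "ob W" and g: "g \<in> Hom K W C"
  and z: "pull K g d = ezero K W A" shows "\<exists>h\<in>Hom K W B. cmp K y h = g"
proof -
  have o: "ob A" "ob B" "ob C" using R1[OF t] by auto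
  have "push K (mzero K Z0 A) (ezero K W Z0) = pull K g d"
    using push_ezero[OF W obZ o(1) mzero_in[OF obZ o(1)]] z by simp
  from R4[OF triZl[OF W] t mzero_in[OF obZ o(1)] g this] obtain b where
    "b \<in> Hom K W B" "cmp K y b = cmp K g (idm K W)" by blast
  then show ?thesis using idr[OF W o(3) g] by auto
qed

lemma extend: assumes t: "etri K A B C x y d" and W: "ob W" and f: "f \<in> Hom K A W"
  and z: "push K f d = ezero K C W" shows "\<exists>h\<in>Hom K B W. cmp K h x = f"
proof -
  have o: "ob A" "ob B" "ob C" using R1[OF t] by auto
  have "push K f d = pull K (mzero K C Z0) (ezero K Z0 W)"
    using pull_ezero[OF obZ o(3) W mzero_in[OF o(3) obZ]] z by simp
  from R4[OF t triZr[OF W] f mzero_in[OF o(3) obZ] this] obtain b where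
    "b \<in> Hom K B W" "cmp K b x = cmp K (idm K W) f" by blast
  then show ?thesis using idl[OF o(1) W f] by auto
qed

lemma pull_defl: assumes t: "etri K A B C x y d" shows "pull K y d = ezero K B A"
proof -
  have o: "ob A" "ob B" "ob C" "y \<in> Hom K B C" using R1[OF t] by auto
  from et3op_r[OF triZl[OF o(2)] t idin[OF o(2)] o(4)] obtain a where
    "a \<in> Hom K Z0 A" "push K a (ezero K B Z0) = pull K y d" by blast
  then show ?thesis using push_ezero[OF o(2) obZ o(1)] by metis
qed

lemma univ_proj: assumes t: "etri K A P C x0 p0 d0" and P: "projective K P" and X: "ob X'"
  and e: "\<epsilon> \<in> Ext K C X'" shows "\<exists>g\<in>Hom K A X'. push K g d0 = \<epsilon>"
proof -
  have o: "ob A" "ob P" "ob C" "p0 \<in> Hom K P C" using R1[OF t] by auto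
  obtain W u v where t2: "etri K X' W C u v \<epsilon>" using R2[OF X o(3) e] by blast
  have "pull K p0 \<epsilon> = ezero K P X'" using P X pull_in[OF o(3) o(2) X o(4) e]
    unfolding projective_def by blast
  from lift[OF t2 o(2) o(4) this] obtain h where h: "h \<in> Hom K P W" "cmp K v h = p0" by blast
  have "cmp K (idm K C) p0 = cmp K v h" using h idl[OF o(2,3,4)] by simp
  from et3op_r[OF t t2 h(1) idin[OF o(3)] this] obtain a where
    "a \<in> Hom K A X'" "push K a d0 = pull K (idm K C) \<epsilon>" by blast
  then show ?thesis using pull_id[OF o(3) X e] by auto
qed

end

context gc begin

lemma et4op_r: "etri K D A B f' f d \<Longrightarrow> etri K F B C g' g d' \<Longrightarrow>
        (\<exists>E h h' dd e d''. E \<in> Ob K \<and> h \<in> Hom K A C \<and> h' \<in> Hom K E A \<and> dd \<in> Hom K D E \<and> e \<in> Hom K E F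
           \<and> cmp K h' dd = f' \<and> cmp K f h' = cmp K g' e \<and> h = cmp K g f
           \<and> etri K E A C h' h d''
           \<and> etri K D E F dd e (pull K g' d)
           \<and> d' = push K e d''
           \<and> push K dd d = pull K g d'')"
  using et4op unfolding ET4op_def by blast

lemma main_tri:
  assumes ec: "ext_closed K XX" and XO: "XX \<subseteq> Ob K" and S: "S \<in> XX" and C: "ob C"
    and dl: "\<delta> \<in> Ext K C S"
    and univ: "\<forall>X'\<in>XX. \<forall>\<epsilon>\<in>Ext K C X'. \<exists>h\<in>Hom K S X'. \<epsilon> = push K h \<delta>"
    and mini: "\<forall>\<phi>\<in>Hom K S S. push K \<phi> \<delta> = \<delta> \<longrightarrow> (\<exists>\<rho>\<in>Hom K S S. cmp K \<phi> \<rho> = idm K S)"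
  shows "\<exists>Y x y. Y \<in> perpL K XX \<and> etri K S Y C x y \<delta> \<and> right_approx K (perpL K XX) C Y y"
proof -
  have oS: "ob S" using S XO by auto
  obtain Y x y where t: "etri K S Y C x y \<delta>" using R2[OF oS C dl] by blast
  have oY: "ob Y" and x: "x \<in> Hom K S Y" and y: "y \<in> Hom K Y C" using R1[OF t] by auto
  have perp: "Y \<in> perpL K XX"
    unfolding perpL_def
  proof (intro CollectI conjI ballI oY)
    fix X' assume X': "X' \<in> XX"
    have oX: "ob X'" using X' XO by auto
    show "Ext K Y X' = {ezero K Y X'}"
    proof
      show "{ezero K Y X'} \<subseteq> Ext K Y X'" using egf(1)[OF oY oX] by simp
      show "Ext K Y X' \<subseteq> {ezero K Y X'}"
      proof
        fix \<epsilon> assume e: "\<epsilon> \<in> Ext K Y X'"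
        obtain W u v where t2: "etri K X' W Y u v \<epsilon>" using R2[OF oX oY e] by blast
        from et4op_r[OF t2 t] obtain E h h' dd ee d'' where
          E: "ob E" "h' \<in> Hom K E W" "dd \<in> Hom K X' E" "ee \<in> Hom K E S"
          "etri K E W C h' h d''" "etri K X' E S dd ee (pull K x \<epsilon>)"
          "\<delta> = push K ee d''" "push K dd \<epsilon> = pull K y d''" by blast
        have EX: "E \<in> XX" using ec E(6) X' S unfolding ext_closed_def by blast
        have d2: "d'' \<in> Ext K C E" using R1[OF E(5)] by auto
        obtain k where k: "k \<in> Hom K S E" "d'' = push K k \<delta>" using univ EX d2 by blast
        have phi: "cmp K ee k \<in> Hom K S S" using comp[OF oS E(1) oS k(1) E(4)] .
        have "push K (cmp K ee k) \<delta> = push K ee (push K k \<delta>)"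
          using push_cmp[OF C oS E(1) oS k(1) E(4) dl] .
        also have "\<dots> = \<delta>" using k(2) E(7) by metis
        finally have "push K (cmp K ee k) \<delta> = \<delta>" .
        then obtain \<rho> where r: "\<rho> \<in> Hom K S S" "cmp K (cmp K ee k) \<rho> = idm K S" using mini phi by blast
        define s where "s = cmp K k \<rho>"
        have s: "s \<in> Hom K S E" unfolding s_def using comp[OF oS oS E(1) r(1) k(1)] .
        have es: "cmp K ee s = idm K S" unfolding s_def using r assoc[OF oS oS E(1) oS r(1) k(1) E(4)] by simp
        define \<theta> where "\<theta> = pull K x \<epsilon>"
        have th: "\<theta> \<in> Ext K S X'" unfolding \<theta>_def using pull_in[OF oY oS oX x e] .
        have "pull K ee \<theta> = ezero K E X'" unfolding \<theta>_def using pull_defl[OF E(6)] .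
        hence "pull K s (pull K ee \<theta>) = ezero K S X'" using pull_ezero[OF E(1) oS oX s] by simp
        hence th0: "\<theta> = ezero K S X'"
          using pull_cmp[OF oS E(1) oS oX E(4) s th] es pull_id[OF oS oX th] by simp
        have "push K (idm K X') \<theta> = ezero K S X'" using push_id[OF oS oX th] th0 by simp
        from extend[OF E(6)[folded \<theta>_def] oX idin[OF oX] this] obtain r where
          rr: "r \<in> Hom K E X'" "cmp K r dd = idm K X'" by blast
        have "\<epsilon> = push K (cmp K r dd) \<epsilon>" using rr push_id[OF oY oX e] by simp
        also have "\<dots> = push K r (push K dd \<epsilon>)" using push_cmp[OF oY oX E(1) oX E(3) rr(1) e] .
        also have "\<dots> = push K r (pull K y d'')" using E(8) by simp
        also have "\<dots> = pull K y (push K r d'')" using push_pull[OF C oY E(1) oX rr(1) y d2] .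
        finally have e1: "\<epsilon> = pull K y (push K r d'')" .
        have "push K r d'' \<in> Ext K C X'" using push_in[OF C E(1) oX rr(1) d2] .
        then obtain tt where tt: "tt \<in> Hom K S X'" "push K r d'' = push K tt \<delta>" using univ X' by blast
        have "pull K y (push K tt \<delta>) = push K tt (pull K y \<delta>)" using push_pull[OF C oY oS oX tt(1) y dl] by simp
        also have "\<dots> = ezero K Y X'" using pull_defl[OF t] push_ezero[OF oY oS oX tt(1)] by simp
        finally show "\<epsilon> \<in> {ezero K Y X'}" using e1 tt(2) by (metis singletonI)
      qed
    qed
  qed
  have "right_approx K (perpL K XX) C Y y"
    unfolding right_approx_def
  proof (intro conjI ballI perp y)
    fix Y' g assume Y': "Y' \<in> perpL K XX" and g: "g \<in> Hom K Y' C"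
    have oY': "ob Y'" using Y' unfolding perpL_def by auto
    have "pull K g \<delta> = ezero K Y' S" using Y' S pull_in[OF C oY' oS g dl] unfolding perpL_def by blast
    from lift[OF t oY' g this] show "\<exists>h\<in>Hom K Y' Y. cmp K y h = g" .
  qed
  then show ?thesis using perp t by blast
qed

end

context gc begin
abbreviation RR where "RR S \<equiv> Hom K S S"
abbreviation mul (infixr "\<odot>" 70) where "a \<odot> b \<equiv> cmp K a b"
abbreviation pl (infixr "\<boxplus>" 65) where "a \<boxplus> b \<equiv> madd K a b"
abbreviation zz where "zz S \<equiv> mzero K S S"
abbreviation one where "one S \<equiv> idm K S"

context fixes S assumes oS: "ob S" begin
declare oS[simp]

lemma r_mul[simp]: "a \<in> (RR S) \<Longrightarrow> b \<in> (RR S) \<Longrightarrow> a \<odot> b \<in> (RR S)" using comp[OF oS oS oS] by blast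
lemma r_add[simp]: "a \<in> (RR S) \<Longrightarrow> b \<in> (RR S) \<Longrightarrow> a \<boxplus> b \<in> (RR S)" using madd_in[OF oS oS] by blast
lemma r_zero[simp]: "(zz S) \<in> (RR S)" using mzero_in[OF oS oS] .
lemma r_one[simp]: "(one S) \<in> (RR S)" using idin[OF oS] .
lemma r_ass[simp]: "a \<in> (RR S) \<Longrightarrow> b \<in> (RR S) \<Longrightarrow> c \<in> (RR S) \<Longrightarrow> (a \<odot> b) \<odot> c = a \<odot> b \<odot> c"
  using assoc[OF oS oS oS oS] by metis
lemma r_dl[simp]: "a \<in> (RR S) \<Longrightarrow> b \<in> (RR S) \<Longrightarrow> c \<in> (RR S) \<Longrightarrow> a \<odot> (b \<boxplus> c) = a \<odot> b \<boxplus> a \<odot> c"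
  using distl[OF oS oS oS] by metis
lemma r_dr[simp]: "a \<in> (RR S) \<Longrightarrow> b \<in> (RR S) \<Longrightarrow> c \<in> (RR S) \<Longrightarrow> (a \<boxplus> b) \<odot> c = a \<odot> c \<boxplus> b \<odot> c"
  using distr[OF oS oS oS] by metis
lemma r_comm: "a \<in> (RR S) \<Longrightarrow> b \<in> (RR S) \<Longrightarrow> a \<boxplus> b = b \<boxplus> a" using hgf(4)[OF oS oS] by metis
lemma r_aass: "a \<in> (RR S) \<Longrightarrow> b \<in> (RR S) \<Longrightarrow> c \<in> (RR S) \<Longrightarrow> (a \<boxplus> b) \<boxplus> c = a \<boxplus> b \<boxplus> c"
  using hgf(3)[OF oS oS] by metis
lemma r_lcomm: "a \<in> (RR S) \<Longrightarrow> b \<in> (RR S) \<Longrightarrow> c \<in> (RR S) \<Longrightarrow> a \<boxplus> b \<boxplus> c = b \<boxplus> a \<boxplus> c"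
  using r_comm[of a b] r_aass[of a b c] r_aass[of b a c] by simp
lemmas r_ac = r_aass r_comm r_lcomm
lemma r_z1[simp]: "a \<in> (RR S) \<Longrightarrow> (zz S) \<boxplus> a = a" using hgf(5)[OF oS oS] by metis
lemma r_z2[simp]: "a \<in> (RR S) \<Longrightarrow> a \<boxplus> (zz S) = a" using hgf(6)[OF oS oS] by metis
lemma r_z3[simp]: "a \<in> (RR S) \<Longrightarrow> (zz S) \<odot> a = (zz S)" using cmp_zero_l[OF oS oS oS] by metis
lemma r_z4[simp]: "a \<in> (RR S) \<Longrightarrow> a \<odot> (zz S) = (zz S)" using cmp_zero_r[OF oS oS oS] by metis
lemma r_o1[simp]: "a \<in> (RR S) \<Longrightarrow> (one S) \<odot> a = a" using idl[OF oS oS] by metis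
lemma r_o2[simp]: "a \<in> (RR S) \<Longrightarrow> a \<odot> (one S) = a" using idr[OF oS oS] by metis
lemma r_cancel: "a \<in> (RR S) \<Longrightarrow> b \<in> (RR S) \<Longrightarrow> c \<in> (RR S) \<Longrightarrow> a \<boxplus> c = b \<boxplus> c \<Longrightarrow> a = b"
  using ab_grp_cancel[OF hg[OF oS oS], of c a b] r_comm by metis
lemma r_cancel0: "a \<in> (RR S) \<Longrightarrow> c \<in> (RR S) \<Longrightarrow> a \<boxplus> c = c \<Longrightarrow> a = (zz S)"
  using r_cancel[of a "zz S" c] by simp

lemma ext: "a \<odot> b = c \<Longrightarrow> a \<in> (RR S) \<Longrightarrow> b \<in> (RR S) \<Longrightarrow> z \<in> (RR S) \<Longrightarrow> a \<odot> b \<odot> z = c \<odot> z"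
  using r_ass[of a b z] by simp

definition cunit :: "(nat \<Rightarrow> 'm) \<Rightarrow> nat \<Rightarrow> 'm \<Rightarrow> bool" where
  "cunit e l u \<longleftrightarrow> u \<in> (RR S) \<and> e l \<odot> u \<odot> e l = u \<and> (\<exists>w\<in>(RR S). e l \<odot> w \<odot> e l = w \<and> u \<odot> w = e l \<and> w \<odot> u = e l)"

definition loc :: "(nat \<Rightarrow> 'm) \<Rightarrow> nat \<Rightarrow> bool" where
  "loc e l \<longleftrightarrow> e l \<in> (RR S) \<and> e l \<odot> e l = e l \<and> e l \<noteq> (zz S) \<and>
     (\<forall>z\<in>(RR S). cunit e l (e l \<odot> z \<odot> e l) \<or> (\<exists>t. cunit e l t \<and> t \<boxplus> e l \<odot> z \<odot> e l = e l))"

lemma corner_l: assumes a: "E \<in> (RR S)" "E \<odot> E = E" "u \<in> (RR S)" "E \<odot> u \<odot> E = u" shows "E \<odot> u = u"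
proof -
  have 1: "E \<odot> (E \<odot> (u \<odot> E)) = (E \<odot> E) \<odot> (u \<odot> E)" using a(1,3) by simp
  have "E \<odot> u = E \<odot> (E \<odot> (u \<odot> E))" by (simp only: a(4))
  also have "\<dots> = (E \<odot> E) \<odot> (u \<odot> E)" by (rule 1)
  also have "\<dots> = u" by (simp only: a(2) a(4))
  finally show ?thesis .
qed
lemma corner_r: assumes a: "E \<in> (RR S)" "E \<odot> E = E" "u \<in> (RR S)" "E \<odot> u \<odot> E = u" shows "u \<odot> E = u"
proof -
  have 1: "(E \<odot> u \<odot> E) \<odot> E = E \<odot> u \<odot> (E \<odot> E)" using a(1,3) by simp
  have "u \<odot> E = (E \<odot> u \<odot> E) \<odot> E" by (simp only: a(4))
  also have "\<dots> = E \<odot> u \<odot> (E \<odot> E)" by (rule 1)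
  also have "\<dots> = u" by (simp only: a(2) a(4))
  finally show ?thesis .
qed

lemma LR1: assumes l: "loc e l" and t: "t \<in> (RR S)" "e l \<odot> t \<odot> e l = t" "t \<odot> t = t"
  shows "t = (zz S) \<or> t = e l"
proof -
  have el: "e l \<in> (RR S)" "e l \<odot> e l = e l" using l unfolding loc_def by auto
  have tl: "e l \<odot> t = t" and tr: "t \<odot> e l = t" using corner_l[OF el t(1,2)] corner_r[OF el t(1,2)] by auto
  from l t(1) have "cunit e l (e l \<odot> t \<odot> e l) \<or> (\<exists>t'. cunit e l t' \<and> t' \<boxplus> e l \<odot> t \<odot> e l = e l)"
    unfolding loc_def by blast
  then show ?thesis
  proof
    assume "cunit e l (e l \<odot> t \<odot> e l)"
    then obtain w where w: "w \<in> (RR S)" "t \<odot> w = e l" using t(2) unfolding cunit_def by metis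
    have "t = t \<odot> e l" using tr by simp
    also have "\<dots> = t \<odot> t \<odot> w" using w(2) by simp
    also have "\<dots> = (t \<odot> t) \<odot> w" using w(1) t(1) by simp
    also have "\<dots> = e l" by (simp only: t(3) w(2))
    finally show ?thesis by simp
  next
    assume "\<exists>t'. cunit e l t' \<and> t' \<boxplus> e l \<odot> t \<odot> e l = e l"
    then obtain t' where t': "cunit e l t'" "t' \<boxplus> t = e l" using t(2) by metis
    then obtain w where "w \<in> (RR S)" "w \<odot> t' = e l" unfolding cunit_def by blast
    then have tt: "t' \<in> (RR S)" "t' \<boxplus> t = e l" "w \<in> (RR S)" "w \<odot> t' = e l"
      using t' unfolding cunit_def by auto
    have "(t' \<boxplus> t) \<odot> t = t" by (simp only: tt(2) tl)
    moreover have "(t' \<boxplus> t) \<odot> t = t' \<odot> t \<boxplus> t \<odot> t" by (rule r_dr[OF tt(1) t(1) t(1)])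
    ultimately have "t' \<odot> t \<boxplus> t \<odot> t = t" by metis
    hence "t' \<odot> t \<boxplus> t = t" by (simp only: t(3))
    hence z: "t' \<odot> t = (zz S)" using r_cancel0[of "t' \<odot> t" t] tt(1) t(1) by simp
    have "t = e l \<odot> t" using tl by simp
    also have "\<dots> = w \<odot> t' \<odot> t" by (metis r_ass tt(1) tt(3) tt(4) t(1))
    also have "\<dots> = (zz S)" using z tt t by simp
    finally show ?thesis by simp
  qed
qed

lemma LR3: assumes l: "loc e l" and v: "v \<in> (RR S)" "e l \<odot> v \<odot> e l = v"
  and vw: "cunit e l (v \<odot> w)" and w: "cunit e l w" shows "cunit e l v"
proof -
  have el: "e l \<in> (RR S)" "e l \<odot> e l = e l" using l unfolding loc_def by auto
  obtain r where r: "r \<in> (RR S)" "e l \<odot> r \<odot> e l = r" "v \<odot> w \<odot> r = e l" "r \<odot> v \<odot> w = e l"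
    using vw w v unfolding cunit_def by auto
  obtain u where u: "u \<in> (RR S)" "w \<odot> u = e l" "u \<odot> w = e l" "e l \<odot> u \<odot> e l = u"
    and wR: "w \<in> (RR S)" "e l \<odot> w \<odot> e l = w"
    using w unfolding cunit_def by auto
  have vr: "v \<odot> e l = v" using corner_r[OF el v] .
  have rl: "r \<odot> e l = r" using corner_r[OF el r(1,2)] .
  have "r \<odot> v = r \<odot> v \<odot> e l" using vr by simp
  also have "\<dots> = r \<odot> v \<odot> w \<odot> u" using u(1,2) r(1) v(1) wR(1) by simp
  also have "\<dots> = (r \<odot> v \<odot> w) \<odot> u" using u(1) r(1) v(1) wR(1) by simp
  also have "\<dots> = u" using r(4) corner_l[OF el u(1) u(4)] by simp
  finally have rv: "r \<odot> v = u" .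
  have A: "v \<odot> (w \<odot> r) = e l" using r(1,3) v(1) wR(1) by simp
  have B: "(w \<odot> r) \<odot> v = e l" using rv u(1,2) wR(1) r(1) v(1) by simp
  have C: "e l \<odot> (w \<odot> r) \<odot> e l = w \<odot> r"
    using wR r rl corner_l[OF el wR] el ext[OF corner_l[OF el wR]] by simp
  show ?thesis unfolding cunit_def
    apply (intro conjI v(1) v(2))
    apply (rule bexI[where x="w \<odot> r"])
     apply (intro conjI C A B)
    apply (rule r_mul[OF wR(1) r(1)])
    done
qed

end
end

context gc begin
context fixes S assumes oS: "ob S" begin
declare oS[simp]
lemmas [simp] = r_mul[OF oS] r_add[OF oS] r_zero[OF oS] r_one[OF oS] r_ass[OF oS] r_dl[OF oS] r_dr[OF oS]
  r_z1[OF oS] r_z2[OF oS] r_z3[OF oS] r_z4[OF oS] r_o1[OF oS] r_o2[OF oS]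

lemma loc_e: "loc S e l \<Longrightarrow> e l \<in> RR S" "loc S e l \<Longrightarrow> e l \<odot> e l = e l"
  "loc S e l \<Longrightarrow> z \<in> RR S \<Longrightarrow> e l \<odot> e l \<odot> z = e l \<odot> z" "loc S e l \<Longrightarrow> e l \<noteq> zz S"
  unfolding loc_def[OF oS] using ext[OF oS] by auto

lemma cunit_e: "loc S e l \<Longrightarrow> cunit S e l (e l)"
  unfolding cunit_def[OF oS] using loc_e[of e l] by (auto intro!: bexI[of _ "e l"])

lemma LR2: assumes l: "loc S e l" and u: "u1 \<in> RR S" "e l \<odot> u1 \<odot> e l = u1" "u2 \<in> RR S" "e l \<odot> u2 \<odot> e l = u2"
  and s: "cunit S e l (u1 \<boxplus> u2)" shows "cunit S e l u1 \<or> cunit S e l u2"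
proof -
  note el = loc_e[OF l]
  obtain w where w: "w \<in> RR S" "e l \<odot> w \<odot> e l = w" "(u1 \<boxplus> u2) \<odot> w = e l" "w \<odot> (u1 \<boxplus> u2) = e l"
    using s unfolding cunit_def[OF oS] by blast
  have u1r: "u1 \<odot> e l = u1" using corner_r[OF oS el(1,2) u(1,2)] .
  have u2r: "u2 \<odot> e l = u2" using corner_r[OF oS el(1,2) u(3,4)] .
  have u1l: "e l \<odot> u1 = u1" using corner_l[OF oS el(1,2) u(1,2)] .
  have u2l: "e l \<odot> u2 = u2" using corner_l[OF oS el(1,2) u(3,4)] .
  have wl: "e l \<odot> w = w" using corner_l[OF oS el(1,2) w(1,2)] .
  have wr: "w \<odot> e l = w" using corner_r[OF oS el(1,2) w(1,2)] .
  have sc: "e l \<odot> (u1 \<boxplus> u2) \<odot> e l = u1 \<boxplus> u2" using u el by simp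
  have wc: "cunit S e l w" unfolding cunit_def[OF oS]
    using w sc r_add[OF oS u(1) u(3)] by blast
  have sum: "u1 \<odot> w \<boxplus> u2 \<odot> w = e l" using w(3) u(1,3) w(1) by simp
  have c1: "e l \<odot> (u1 \<odot> w) \<odot> e l = u1 \<odot> w"
    using u1l wr ext[OF oS u1l] u(1) w(1) el(1) by simp
  have c2: "e l \<odot> (u2 \<odot> w) \<odot> e l = u2 \<odot> w"
    using u2l wr ext[OF oS u2l] u(3) w(1) el(1) by simp
  have "cunit S e l (e l \<odot> (u1 \<odot> w) \<odot> e l) \<or> (\<exists>t. cunit S e l t \<and> t \<boxplus> e l \<odot> (u1 \<odot> w) \<odot> e l = e l)"
    using l r_mul[OF oS u(1) w(1)] unfolding loc_def[OF oS] by blast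
  hence "cunit S e l (u1 \<odot> w) \<or> cunit S e l (u2 \<odot> w)"
  proof
    assume "cunit S e l (e l \<odot> (u1 \<odot> w) \<odot> e l)" thus ?thesis using c1 by simp
  next
    assume "\<exists>t. cunit S e l t \<and> t \<boxplus> e l \<odot> (u1 \<odot> w) \<odot> e l = e l"
    then obtain t where t: "cunit S e l t" "t \<boxplus> u1 \<odot> w = e l" using c1 by metis
    have tR: "t \<in> RR S" using t(1) unfolding cunit_def[OF oS] by blast
    have "t \<boxplus> u1 \<odot> w = u2 \<odot> w \<boxplus> u1 \<odot> w" using t(2) sum r_comm[OF oS, of "u1 \<odot> w" "u2 \<odot> w"] u(1,3) w(1) by simp
    hence "t = u2 \<odot> w" using r_cancel[OF oS tR r_mul[OF oS u(3) w(1)] r_mul[OF oS u(1) w(1)]] by blast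
    thus ?thesis using t(1) by simp
  qed
  thus ?thesis using LR3[OF oS l u(1,2) _ wc] LR3[OF oS l u(3,4) _ wc] by blast
qed

lemma LR4: assumes k: "loc S e k" and l: "loc S e l" and x: "x \<in> RR S" and ej: "e j \<in> RR S"
  and rad: "\<forall>y\<in>RR S. \<not> cunit S e k (e k \<odot> y \<odot> e j \<odot> x \<odot> e k)"
  and y: "y \<in> RR S" and v: "v \<in> RR S"
  shows "\<not> cunit S e l (e l \<odot> y \<odot> e j \<odot> x \<odot> e k \<odot> v \<odot> e l)"
proof
  assume cu: "cunit S e l (e l \<odot> y \<odot> e j \<odot> x \<odot> e k \<odot> v \<odot> e l)"
  note ek = loc_e[OF k] and el = loc_e[OF l]
  obtain w where w: "w \<in> RR S" "e l \<odot> w \<odot> e l = w"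
    "(e l \<odot> y \<odot> e j \<odot> x \<odot> e k \<odot> v \<odot> e l) \<odot> w = e l"
    using cu unfolding cunit_def[OF oS] by blast
  have wl: "e l \<odot> w = w" using corner_l[OF oS el(1,2) w(1,2)] .
  define a where "a = e l \<odot> y \<odot> e j \<odot> x \<odot> e k"
  define b where "b = v \<odot> w"
  have aR: "a \<in> RR S" and bR: "b \<in> RR S" unfolding a_def b_def using ek el y x ej v w by auto
  have ab: "a \<odot> b = e l" using w(3) wl ext[OF oS wl] ek el y x ej v w unfolding a_def b_def by simp
  have ae: "a \<odot> e k = a" unfolding a_def using ek el y x ej v w by simp
  have ea: "e l \<odot> a = a" unfolding a_def using ek el y x ej v w by simp
  define t where "t = e k \<odot> b \<odot> a"
  have tR: "t \<in> RR S" unfolding t_def using aR bR ek by simp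
  have tc: "e k \<odot> t \<odot> e k = t" unfolding t_def using aR bR ek ae ext[OF oS ae] by simp
  have "t \<odot> t = e k \<odot> b \<odot> (a \<odot> e k) \<odot> b \<odot> a" unfolding t_def using aR bR ek ae ext[OF oS ae] by simp
  also have "\<dots> = e k \<odot> b \<odot> (a \<odot> b) \<odot> a" using ae aR bR ek ext[OF oS ae] by simp
  also have "\<dots> = t" unfolding t_def using ab ea by simp
  finally have tt: "t \<odot> t = t" .
  from LR1[OF oS k tR tc tt] show False
  proof
    assume t0: "t = zz S"
    have "e l = e l \<odot> e l" using el by simp
    also have "\<dots> = (a \<odot> b) \<odot> (a \<odot> b)" using ab by simp
    also have "\<dots> = a \<odot> t \<odot> b" unfolding t_def using aR bR ek ae ext[OF oS ae] by simp
    also have "\<dots> = zz S" using t0 aR bR by simp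
    finally show False using el(4) by simp
  next
    assume t1: "t = e k"
    have "t = e k \<odot> (v \<odot> w \<odot> e l \<odot> y) \<odot> e j \<odot> x \<odot> e k"
      unfolding t_def a_def b_def using ek el y x ej v w by simp
    hence "cunit S e k (e k \<odot> (v \<odot> w \<odot> e l \<odot> y) \<odot> e j \<odot> x \<odot> e k)" using t1 cunit_e[OF k] by simp
    moreover have "v \<odot> w \<odot> e l \<odot> y \<in> RR S" using v w el y by simp
    ultimately show False using rad by blast
  qed
qed

end
end

context gc begin
context fixes S assumes oS: "ob S" begin
declare oS[simp]
lemmas [simp] = r_mul[OF oS] r_add[OF oS] r_zero[OF oS] r_one[OF oS] r_ass[OF oS] r_dl[OF oS] r_dr[OF oS]
  r_z1[OF oS] r_z2[OF oS] r_z3[OF oS] r_z4[OF oS] r_o1[OF oS] r_o2[OF oS]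

definition FF :: "(nat \<Rightarrow> 'm) \<Rightarrow> nat list \<Rightarrow> 'm" where "FF e js = msum K S S (map e js)"
lemma FF_simps[simp]: "FF e [] = zz S" "FF e (k # js) = e k \<boxplus> FF e js"
  unfolding FF_def msum_def by simp_all

definition HH :: "(nat \<Rightarrow> 'm) \<Rightarrow> nat list \<Rightarrow> bool" where
  "HH e js \<longleftrightarrow> distinct js \<and> (\<forall>j\<in>set js. loc S e j) \<and> (\<forall>j\<in>set js. \<forall>k\<in>set js. j \<noteq> k \<longrightarrow> e j \<odot> e k = zz S)"

lemma HH_cons: "HH e (k # js) \<Longrightarrow> HH e js" unfolding HH_def by auto
lemma HH_in: "HH e js \<Longrightarrow> j \<in> set js \<Longrightarrow> e j \<in> RR S" unfolding HH_def using loc_e[OF oS] by blast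

lemma FF_in: "HH e js \<Longrightarrow> FF e js \<in> RR S"
proof (induction js)
  case Nil then show ?case by simp
next
  case (Cons k js) then show ?case using HH_cons[OF Cons(2)] HH_in[OF Cons(2), of k] by simp
qed

lemma FF_orth: "e k \<in> RR S \<Longrightarrow> (\<forall>j\<in>set js. e j \<in> RR S \<and> e k \<odot> e j = zz S \<and> e j \<odot> e k = zz S) \<Longrightarrow>
  e k \<odot> FF e js = zz S \<and> FF e js \<odot> e k = zz S \<and> FF e js \<in> RR S"
  by (induction js) auto

lemma FF_idem: "HH e js \<Longrightarrow> j \<in> set js \<Longrightarrow> e j \<odot> FF e js = e j \<and> FF e js \<odot> e j = e j"
proof (induction js)
  case Nil then show ?case by simp
next
  case (Cons k js)
  have H: "HH e js" using Cons(2) by (rule HH_cons)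
  have ek: "e k \<in> RR S" "e k \<odot> e k = e k" using Cons(2) loc_e[OF oS] unfolding HH_def by auto
  have orth: "\<forall>j\<in>set js. e j \<in> RR S \<and> e k \<odot> e j = zz S \<and> e j \<odot> e k = zz S"
    using Cons(2) HH_in[OF H] unfolding HH_def by auto
  note O = FF_orth[OF ek(1) orth]
  show ?case
  proof (cases "j = k")
    case True then show ?thesis using ek O by simp
  next
    case False
    then have j: "j \<in> set js" using Cons(3) by simp
    have "e j \<odot> e k = zz S" "e k \<odot> e j = zz S" using Cons(2) False Cons(3) unfolding HH_def by auto
    then show ?thesis using Cons.IH[OF H j] ek O HH_in[OF H j] by simp
  qed
qed

lemma FF_idem2: "HH e js \<Longrightarrow> FF e js \<odot> FF e js = FF e js"
proof (induction js)
  case Nil then show ?case by simp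
next
  case (Cons k js)
  have H: "HH e js" using Cons(2) by (rule HH_cons)
  have ek: "e k \<in> RR S" "e k \<odot> e k = e k" using Cons(2) loc_e[OF oS] unfolding HH_def by auto
  have orth: "\<forall>j\<in>set js. e j \<in> RR S \<and> e k \<odot> e j = zz S \<and> e j \<odot> e k = zz S"
    using Cons(2) HH_in[OF H] unfolding HH_def by auto
  note O = FF_orth[OF ek(1) orth]
  show ?case using Cons.IH[OF H] ek O by simp
qed

end
end

context gc begin
context fixes S assumes oS: "ob S" begin
declare oS[simp]
lemmas [simp] = r_mul[OF oS] r_add[OF oS] r_zero[OF oS] r_one[OF oS] r_ass[OF oS] r_dl[OF oS] r_dr[OF oS]
  r_z1[OF oS] r_z2[OF oS] r_z3[OF oS] r_z4[OF oS] r_o1[OF oS] r_o2[OF oS]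
lemmas rac7 = r_ac[OF oS]

lemma RL: "HH S e js \<Longrightarrow> x \<in> RR S \<Longrightarrow> FF S e js \<odot> x \<odot> FF S e js = x \<Longrightarrow>
  (\<forall>j\<in>set js. \<forall>l\<in>set js. \<forall>y\<in>RR S. \<not> cunit S e l (e l \<odot> y \<odot> e j \<odot> x \<odot> e l)) \<Longrightarrow>
  \<exists>g\<in>RR S. g = FF S e js \<boxplus> x \<odot> g \<and> g \<odot> FF S e js = g"
proof (induction js arbitrary: x)
  case Nil
  then have "x = zz S" by simp
  then show ?case by (intro bexI[of _ "zz S"]) simp_all
next
  case (Cons k js x)
  note HHk = Cons(2) and xR = Cons(3) and fx = Cons(4) and rad = Cons(5)
  have H: "HH S e js" using HHk by (rule HH_cons[OF oS])
  have lk: "loc S e k" using HHk unfolding HH_def[OF oS] by simp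
  note ek = loc_e[OF oS lk]
  define f where "f = FF S e js"
  have fR: "f \<in> RR S" unfolding f_def using FF_in[OF oS H] .
  have orth: "\<forall>j\<in>set js. e j \<in> RR S \<and> e k \<odot> e j = zz S \<and> e j \<odot> e k = zz S"
    using HHk HH_in[OF oS H] unfolding HH_def[OF oS] by auto
  have O: "e k \<odot> f = zz S" "f \<odot> e k = zz S" using FF_orth[OF oS ek(1) orth] unfolding f_def by auto
  have ff: "f \<odot> f = f" unfolding f_def using FF_idem2[OF oS H] .
  have Z1: "\<And>g h. g \<in> RR S \<Longrightarrow> h \<in> RR S \<Longrightarrow> g \<odot> e k = g \<Longrightarrow> f \<odot> h = h \<Longrightarrow> g \<odot> h = zz S"
  proof -
    fix g h assume a: "g \<in> RR S" "h \<in> RR S" "g \<odot> e k = g" "f \<odot> h = h"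
    have "g \<odot> h = (g \<odot> e k) \<odot> (f \<odot> h)" by (simp only: a(3) a(4))
    also have "\<dots> = g \<odot> (e k \<odot> f) \<odot> h" using a(1,2) ek(1) fR by simp
    also have "\<dots> = zz S" using O a(1,2) by simp
    finally show "g \<odot> h = zz S" .
  qed
  have Z2: "\<And>g h. g \<in> RR S \<Longrightarrow> h \<in> RR S \<Longrightarrow> g \<odot> f = g \<Longrightarrow> e k \<odot> h = h \<Longrightarrow> g \<odot> h = zz S"
  proof -
    fix g h assume a: "g \<in> RR S" "h \<in> RR S" "g \<odot> f = g" "e k \<odot> h = h"
    have "g \<odot> h = (g \<odot> f) \<odot> (e k \<odot> h)" by (simp only: a(3) a(4))
    also have "\<dots> = g \<odot> (f \<odot> e k) \<odot> h" using a(1,2) ek(1) fR by simp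
    also have "\<dots> = zz S" using O a(1,2) by simp
    finally show "g \<odot> h = zz S" .
  qed
  have A1: "\<And>g z. g \<in> RR S \<Longrightarrow> z \<in> RR S \<Longrightarrow> g \<odot> e k = g \<Longrightarrow> g \<odot> e k \<odot> z = g \<odot> z"
    using ext[OF oS] ek(1) by blast
  have A2: "\<And>g z. g \<in> RR S \<Longrightarrow> z \<in> RR S \<Longrightarrow> g \<odot> f = g \<Longrightarrow> g \<odot> f \<odot> z = g \<odot> z"
    using ext[OF oS] fR by blast
  have A3: "\<And>g z. g \<in> RR S \<Longrightarrow> z \<in> RR S \<Longrightarrow> e k \<odot> g = g \<Longrightarrow> e k \<odot> g \<odot> z = g \<odot> z"
    using ext[OF oS] ek(1) by blast
  have A4: "\<And>g z. g \<in> RR S \<Longrightarrow> z \<in> RR S \<Longrightarrow> f \<odot> g = g \<Longrightarrow> f \<odot> g \<odot> z = g \<odot> z"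
    using ext[OF oS] fR by blast
  note base = ek(1,2) fR ff O
  define p where "p = e k \<odot> x \<odot> e k"
  define q where "q = e k \<odot> x \<odot> f"
  define r where "r = f \<odot> x \<odot> e k"
  define m where "m = f \<odot> x \<odot> f"
  have gen: "p \<in> RR S" "q \<in> RR S" "r \<in> RR S" "m \<in> RR S" unfolding p_def q_def r_def m_def using xR base by simp_all
  have ty: "e k \<odot> p = p" "p \<odot> e k = p" "e k \<odot> q = q" "q \<odot> f = q" "f \<odot> r = r" "r \<odot> e k = r"
    "f \<odot> m = m" "m \<odot> f = m"
    unfolding p_def q_def r_def m_def using xR base A1 A2 A3 A4 by simp_all
  have "x = (e k \<boxplus> f) \<odot> x \<odot> (e k \<boxplus> f)" using fx unfolding f_def by simp
  also have "\<dots> = p \<boxplus> q \<boxplus> r \<boxplus> m" unfolding p_def q_def r_def m_def using xR base by (simp add: rac7)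
  finally have xs: "x = p \<boxplus> q \<boxplus> r \<boxplus> m" .
  have nu: "\<not> cunit S e k (e k \<odot> x \<odot> e k)"
    using rad[rule_format, of k k "one S"] ek xR A3 by simp
  from lk xR have "cunit S e k (e k \<odot> x \<odot> e k) \<or> (\<exists>t. cunit S e k t \<and> t \<boxplus> e k \<odot> x \<odot> e k = e k)"
    unfolding loc_def[OF oS] by blast
  then obtain D where D: "cunit S e k D" "D \<boxplus> p = e k" using nu unfolding p_def by blast
  then obtain a where a: "a \<in> RR S" "e k \<odot> a \<odot> e k = a" "D \<odot> a = e k" and DR: "D \<in> RR S"
    unfolding cunit_def[OF oS] by blast
  have tya: "e k \<odot> a = a" "a \<odot> e k = a" using corner_l[OF oS ek(1,2) a(1,2)] corner_r[OF oS ek(1,2) a(1,2)] by auto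
  have "(D \<boxplus> p) \<odot> a = e k \<odot> a" by (simp only: D(2))
  hence key: "e k \<boxplus> p \<odot> a = a" using DR gen a tya by simp
  note simps = base gen ty tya a(1) A3[OF ek(1) _ ek(2)] A1[OF ek(1) _ ek(2)] ek(2) ek(2) A4[OF fR _ ff] A2[OF fR _ ff] ff ff A3[OF gen(1) _ ty(1)] A1[OF gen(1) _ ty(2)] ty(1) ty(2) A3[OF gen(2) _ ty(3)] A2[OF gen(2) _ ty(4)] ty(3) ty(4) A4[OF gen(3) _ ty(5)] A1[OF gen(3) _ ty(6)] ty(5) ty(6) A4[OF gen(4) _ ty(7)] A2[OF gen(4) _ ty(8)] ty(7) ty(8) A3[OF a(1) _ tya(1)] A1[OF a(1) _ tya(2)] tya(1) tya(2) Z1[OF ek(1) fR ek(2) ff] ext[OF oS Z1[OF ek(1) fR ek(2) ff] ek(1) fR] Z1[OF ek(1) gen(3) ek(2) ty(5)] ext[OF oS Z1[OF ek(1) gen(3) ek(2) ty(5)] ek(1) gen(3)] Z1[OF ek(1) gen(4) ek(2) ty(7)] ext[OF oS Z1[OF ek(1) gen(4) ek(2) ty(7)] ek(1) gen(4)] Z2[OF fR ek(1) ff ek(2)] ext[OF oS Z2[OF fR ek(1) ff ek(2)] fR ek(1)] Z2[OF fR gen(1) ff ty(1)] ext[OF oS Z2[OF fR gen(1) ff ty(1)] fR gen(1)] Z2[OF fR gen(2) ff ty(3)] ext[OF oS Z2[OF fR gen(2) ff ty(3)] fR gen(2)] Z2[OF fR a(1) ff tya(1)] ext[OF oS Z2[OF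 fR a(1) ff tya(1)] fR a(1)] Z1[OF gen(1) fR ty(2) ff] ext[OF oS Z1[OF gen(1) fR ty(2) ff] gen(1) fR] Z1[OF gen(1) gen(3) ty(2) ty(5)] ext[OF oS Z1[OF gen(1) gen(3) ty(2) ty(5)] gen(1) gen(3)] Z1[OF gen(1) gen(4) ty(2) ty(7)] ext[OF oS Z1[OF gen(1) gen(4) ty(2) ty(7)] gen(1) gen(4)] Z2[OF gen(2) ek(1) ty(4) ek(2)] ext[OF oS Z2[OF gen(2) ek(1) ty(4) ek(2)] gen(2) ek(1)] Z2[OF gen(2) gen(1) ty(4) ty(1)] ext[OF oS Z2[OF gen(2) gen(1) ty(4) ty(1)] gen(2) gen(1)] Z2[OF gen(2) gen(2) ty(4) ty(3)] ext[OF oS Z2[OF gen(2) gen(2) ty(4) ty(3)] gen(2) gen(2)] Z2[OF gen(2) a(1) ty(4) tya(1)] ext[OF oS Z2[OF gen(2) a(1) ty(4) tya(1)] gen(2) a(1)] Z1[OF gen(3) fR ty(6) ff] ext[OF oS Z1[OF gen(3) fR ty(6) ff] gen(3) fR] Z1[OF gen(3) gen(3) ty(6) ty(5)] ext[OF oS Z1[OF gen(3) gen(3) ty(6) ty(5)] gen(3) gen(3)] Z1[OF gen(3) gen(4) ty(6) ty(7)] ext[OF oS Z1[OF gen(3) gen(4) ty(6) ty(7)] gen(3) gen(4)] Z2[OF gen(4) ek(1) ty(8) ek(2)] ext[OF oS Z2[OF gen(4) ek(1) ty(8) ek(2)] gen(4) ek(1)] Z2[OF gen(4) gen(1) ty(8)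 ty(1)] ext[OF oS Z2[OF gen(4) gen(1) ty(8) ty(1)] gen(4) gen(1)] Z2[OF gen(4) gen(2) ty(8) ty(3)] ext[OF oS Z2[OF gen(4) gen(2) ty(8) ty(3)] gen(4) gen(2)] Z2[OF gen(4) a(1) ty(8) tya(1)] ext[OF oS Z2[OF gen(4) a(1) ty(8) tya(1)] gen(4) a(1)] Z1[OF a(1) fR tya(2) ff] ext[OF oS Z1[OF a(1) fR tya(2) ff] a(1) fR] Z1[OF a(1) gen(3) tya(2) ty(5)] ext[OF oS Z1[OF a(1) gen(3) tya(2) ty(5)] a(1) gen(3)] Z1[OF a(1) gen(4) tya(2) ty(7)] ext[OF oS Z1[OF a(1) gen(4) tya(2) ty(7)] a(1) gen(4)]
  define x' where "x' = m \<boxplus> r \<odot> a \<odot> q"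
  have x'R: "x' \<in> RR S" unfolding x'_def using simps by simp
  have fx': "FF S e js \<odot> x' \<odot> FF S e js = x'" unfolding x'_def f_def[symmetric] using simps by simp
  have rad': "\<forall>j\<in>set js. \<forall>l\<in>set js. \<forall>y\<in>RR S. \<not> cunit S e l (e l \<odot> y \<odot> e j \<odot> x' \<odot> e l)"
  proof (intro ballI)
    fix j l y assume j: "j \<in> set js" and l: "l \<in> set js" and y: "y \<in> RR S"
    have ll: "loc S e l" using HHk l unfolding HH_def[OF oS] by simp
    note el = loc_e[OF oS ll]
    have ejR: "e j \<in> RR S" using HH_in[OF oS H j] .
    have tyj: "e j \<odot> f = e j" "f \<odot> e j = e j" using FF_idem[OF oS H j] unfolding f_def by auto
    have tyl: "e l \<odot> f = e l" "f \<odot> e l = e l" using FF_idem[OF oS H l] unfolding f_def by auto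
    note s2 = simps ejR el(1,2) tyj tyl y A3[OF ek(1) _ ek(2)] A1[OF ek(1) _ ek(2)] ek(2) ek(2) A4[OF fR _ ff] A2[OF fR _ ff] ff ff A3[OF gen(1) _ ty(1)] A1[OF gen(1) _ ty(2)] ty(1) ty(2) A3[OF gen(2) _ ty(3)] A2[OF gen(2) _ ty(4)] ty(3) ty(4) A4[OF gen(3) _ ty(5)] A1[OF gen(3) _ ty(6)] ty(5) ty(6) A4[OF gen(4) _ ty(7)] A2[OF gen(4) _ ty(8)] ty(7) ty(8) A3[OF a(1) _ tya(1)] A1[OF a(1) _ tya(2)] tya(1) tya(2) A4[OF ejR _ tyj(2)] A2[OF ejR _ tyj(1)] tyj(2) tyj(1) A4[OF el(1) _ tyl(2)] A2[OF el(1) _ tyl(1)] tyl(2) tyl(1) Z1[OF ek(1) fR ek(2) ff] ext[OF oS Z1[OF ek(1) fR ek(2) ff] ek(1) fR] Z1[OF ek(1) gen(3) ek(2) ty(5)] ext[OF oS Z1[OF ek(1) gen(3) ek(2) ty(5)] ek(1) gen(3)] Z1[OF ek(1) gen(4) ek(2) ty(7)] ext[OF oS Z1[OF ek(1) gen(4) ek(2) ty(7)] ek(1) gen(4)] Z1[OF ek(1) ejR ek(2) tyj(2)] ext[OF oS Z1[OF ek(1) ejR ek(2) tyj(2)] ek(1) ejR] Z1[OF ek(1) el(1) ek(2) tyl(2)] ext[OF oS Z1[OF ek(1) el(1) ek(2) tyl(2)] ek(1) el(1)] Z2[OF fR ek(1) ff ek(2)] ext[OF oS Z2[OF fR ek(1)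 ff ek(2)] fR ek(1)] Z2[OF fR gen(1) ff ty(1)] ext[OF oS Z2[OF fR gen(1) ff ty(1)] fR gen(1)] Z2[OF fR gen(2) ff ty(3)] ext[OF oS Z2[OF fR gen(2) ff ty(3)] fR gen(2)] Z2[OF fR a(1) ff tya(1)] ext[OF oS Z2[OF fR a(1) ff tya(1)] fR a(1)] Z1[OF gen(1) fR ty(2) ff] ext[OF oS Z1[OF gen(1) fR ty(2) ff] gen(1) fR] Z1[OF gen(1) gen(3) ty(2) ty(5)] ext[OF oS Z1[OF gen(1) gen(3) ty(2) ty(5)] gen(1) gen(3)] Z1[OF gen(1) gen(4) ty(2) ty(7)] ext[OF oS Z1[OF gen(1) gen(4) ty(2) ty(7)] gen(1) gen(4)] Z1[OF gen(1) ejR ty(2) tyj(2)] ext[OF oS Z1[OF gen(1) ejR ty(2) tyj(2)] gen(1) ejR] Z1[OF gen(1) el(1) ty(2) tyl(2)] ext[OF oS Z1[OF gen(1) el(1) ty(2) tyl(2)] gen(1) el(1)] Z2[OF gen(2) ek(1) ty(4) ek(2)] ext[OF oS Z2[OF gen(2) ek(1) ty(4) ek(2)] gen(2) ek(1)] Z2[OF gen(2) gen(1) ty(4) ty(1)] ext[OF oS Z2[OF gen(2) gen(1) ty(4) ty(1)] gen(2) gen(1)] Z2[OF gen(2) gen(2) ty(4) ty(3)] ext[OF oS Z2[OF gen(2) gen(2) ty(4) ty(3)] gen(2) gen(2)] Z2[OF gen(2) a(1) ty(4) tya(1)] ext[OF oS Z2[OF gen(2) a(1) ty(4) tya(1)]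 gen(2) a(1)] Z1[OF gen(3) fR ty(6) ff] ext[OF oS Z1[OF gen(3) fR ty(6) ff] gen(3) fR] Z1[OF gen(3) gen(3) ty(6) ty(5)] ext[OF oS Z1[OF gen(3) gen(3) ty(6) ty(5)] gen(3) gen(3)] Z1[OF gen(3) gen(4) ty(6) ty(7)] ext[OF oS Z1[OF gen(3) gen(4) ty(6) ty(7)] gen(3) gen(4)] Z1[OF gen(3) ejR ty(6) tyj(2)] ext[OF oS Z1[OF gen(3) ejR ty(6) tyj(2)] gen(3) ejR] Z1[OF gen(3) el(1) ty(6) tyl(2)] ext[OF oS Z1[OF gen(3) el(1) ty(6) tyl(2)] gen(3) el(1)] Z2[OF gen(4) ek(1) ty(8) ek(2)] ext[OF oS Z2[OF gen(4) ek(1) ty(8) ek(2)] gen(4) ek(1)] Z2[OF gen(4) gen(1) ty(8) ty(1)] ext[OF oS Z2[OF gen(4) gen(1) ty(8) ty(1)] gen(4) gen(1)] Z2[OF gen(4) gen(2) ty(8) ty(3)] ext[OF oS Z2[OF gen(4) gen(2) ty(8) ty(3)] gen(4) gen(2)] Z2[OF gen(4) a(1) ty(8) tya(1)] ext[OF oS Z2[OF gen(4) a(1) ty(8) tya(1)] gen(4) a(1)] Z1[OF a(1) fR tya(2) ff] ext[OF oS Z1[OF a(1) fR tya(2) ff] a(1) fR] Z1[OF a(1) gen(3) tya(2) ty(5)] ext[OF oS Z1[OF a(1) gen(3) tya(2) ty(5)] a(1) gen(3)] Z1[OF a(1) gen(4) tya(2) ty(7)] ext[OF oS Z1[OF a(1)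 gen(4) tya(2) ty(7)] a(1) gen(4)] Z1[OF a(1) ejR tya(2) tyj(2)] ext[OF oS Z1[OF a(1) ejR tya(2) tyj(2)] a(1) ejR] Z1[OF a(1) el(1) tya(2) tyl(2)] ext[OF oS Z1[OF a(1) el(1) tya(2) tyl(2)] a(1) el(1)] Z2[OF ejR ek(1) tyj(1) ek(2)] ext[OF oS Z2[OF ejR ek(1) tyj(1) ek(2)] ejR ek(1)] Z2[OF ejR gen(1) tyj(1) ty(1)] ext[OF oS Z2[OF ejR gen(1) tyj(1) ty(1)] ejR gen(1)] Z2[OF ejR gen(2) tyj(1) ty(3)] ext[OF oS Z2[OF ejR gen(2) tyj(1) ty(3)] ejR gen(2)] Z2[OF ejR a(1) tyj(1) tya(1)] ext[OF oS Z2[OF ejR a(1) tyj(1) tya(1)] ejR a(1)] Z2[OF el(1) ek(1) tyl(1) ek(2)] ext[OF oS Z2[OF el(1) ek(1) tyl(1) ek(2)] el(1) ek(1)] Z2[OF el(1) gen(1) tyl(1) ty(1)] ext[OF oS Z2[OF el(1) gen(1) tyl(1) ty(1)] el(1) gen(1)] Z2[OF el(1) gen(2) tyl(1) ty(3)] ext[OF oS Z2[OF el(1) gen(2) tyl(1) ty(3)] el(1) gen(2)] Z2[OF el(1) a(1) tyl(1) tya(1)] ext[OF oS Z2[OF el(1) a(1) tyl(1) tya(1)] el(1) a(1)]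
    define u1 where "u1 = e l \<odot> y \<odot> e j \<odot> m \<odot> e l"
    define u2 where "u2 = e l \<odot> y \<odot> e j \<odot> r \<odot> a \<odot> q \<odot> e l"
    have sum: "e l \<odot> y \<odot> e j \<odot> x' \<odot> e l = u1 \<boxplus> u2" unfolding u1_def u2_def x'_def using s2 by simp
    have "u1 = e l \<odot> y \<odot> e j \<odot> x \<odot> e l" unfolding u1_def xs using s2 by simp
    hence n1: "\<not> cunit S e l u1" using rad j l y by simp
    have radk: "\<forall>y\<in>RR S. \<not> cunit S e k (e k \<odot> y \<odot> e j \<odot> x \<odot> e k)" using rad j by simp
    have "u2 = e l \<odot> y \<odot> e j \<odot> x \<odot> e k \<odot> (a \<odot> x) \<odot> e l" unfolding u2_def xs using s2 by simp
    hence n2: "\<not> cunit S e l u2" using LR4[OF oS lk ll xR ejR radk y r_mul[OF oS a(1) xR]] by simp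
    have c1: "u1 \<in> RR S" "e l \<odot> u1 \<odot> e l = u1" unfolding u1_def using s2 ext[OF oS el(2)] by simp_all
    have c2: "u2 \<in> RR S" "e l \<odot> u2 \<odot> e l = u2" unfolding u2_def using s2 ext[OF oS el(2)] by simp_all
    show "\<not> cunit S e l (e l \<odot> y \<odot> e j \<odot> x' \<odot> e l)"
      unfolding sum using LR2[OF oS ll c1 c2] n1 n2 by blast
  qed
  from Cons.IH[OF H x'R fx' rad'] obtain s where s: "s \<in> RR S" "s = f \<boxplus> x' \<odot> s" "s \<odot> f = s"
    unfolding f_def by blast
  have "f \<odot> s = f \<odot> (f \<boxplus> x' \<odot> s)" by (rule arg_cong[where f="\<lambda>t. f \<odot> t", OF s(2)])
  also have "\<dots> = f \<boxplus> x' \<odot> s" unfolding x'_def using simps s(1) by simp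
  finally have fs: "f \<odot> s = s" using s(2) by simp
  note simps2 = simps s(1) s(3) fs A3[OF ek(1) _ ek(2)] A1[OF ek(1) _ ek(2)] ek(2) ek(2) A4[OF fR _ ff] A2[OF fR _ ff] ff ff A3[OF gen(1) _ ty(1)] A1[OF gen(1) _ ty(2)] ty(1) ty(2) A3[OF gen(2) _ ty(3)] A2[OF gen(2) _ ty(4)] ty(3) ty(4) A4[OF gen(3) _ ty(5)] A1[OF gen(3) _ ty(6)] ty(5) ty(6) A4[OF gen(4) _ ty(7)] A2[OF gen(4) _ ty(8)] ty(7) ty(8) A3[OF a(1) _ tya(1)] A1[OF a(1) _ tya(2)] tya(1) tya(2) A4[OF s(1) _ fs] A2[OF s(1) _ s(3)] fs s(3) Z1[OF ek(1) fR ek(2) ff] ext[OF oS Z1[OF ek(1) fR ek(2) ff] ek(1) fR] Z1[OF ek(1) gen(3) ek(2) ty(5)] ext[OF oS Z1[OF ek(1) gen(3) ek(2) ty(5)] ek(1) gen(3)] Z1[OF ek(1) gen(4) ek(2) ty(7)] ext[OF oS Z1[OF ek(1) gen(4) ek(2) ty(7)] ek(1) gen(4)] Z1[OF ek(1) s(1) ek(2) fs] ext[OF oS Z1[OF ek(1) s(1) ek(2) fs] ek(1) s(1)] Z2[OF fR ek(1) ff ek(2)] ext[OF oS Z2[OF fR ek(1) ff ek(2)] fR ek(1)] Z2[OF fR gen(1) ff ty(1)] ext[OF oS Z2[OF fR gen(1) ff ty(1)] fR gen(1)] Z2[OF fR gen(2) ff ty(3)] ext[OF oS Z2[OF fR gen(2)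 ff ty(3)] fR gen(2)] Z2[OF fR a(1) ff tya(1)] ext[OF oS Z2[OF fR a(1) ff tya(1)] fR a(1)] Z1[OF gen(1) fR ty(2) ff] ext[OF oS Z1[OF gen(1) fR ty(2) ff] gen(1) fR] Z1[OF gen(1) gen(3) ty(2) ty(5)] ext[OF oS Z1[OF gen(1) gen(3) ty(2) ty(5)] gen(1) gen(3)] Z1[OF gen(1) gen(4) ty(2) ty(7)] ext[OF oS Z1[OF gen(1) gen(4) ty(2) ty(7)] gen(1) gen(4)] Z1[OF gen(1) s(1) ty(2) fs] ext[OF oS Z1[OF gen(1) s(1) ty(2) fs] gen(1) s(1)] Z2[OF gen(2) ek(1) ty(4) ek(2)] ext[OF oS Z2[OF gen(2) ek(1) ty(4) ek(2)] gen(2) ek(1)] Z2[OF gen(2) gen(1) ty(4) ty(1)] ext[OF oS Z2[OF gen(2) gen(1) ty(4) ty(1)] gen(2) gen(1)] Z2[OF gen(2) gen(2) ty(4) ty(3)] ext[OF oS Z2[OF gen(2) gen(2) ty(4) ty(3)] gen(2) gen(2)] Z2[OF gen(2) a(1) ty(4) tya(1)] ext[OF oS Z2[OF gen(2) a(1) ty(4) tya(1)] gen(2) a(1)] Z1[OF gen(3) fR ty(6) ff] ext[OF oS Z1[OF gen(3) fR ty(6) ff] gen(3) fR] Z1[OF gen(3) gen(3) ty(6) ty(5)] ext[OF oS Z1[OF gen(3) gen(3) ty(6) ty(5)] gen(3) gen(3)] Z1[OF gen(3) gen(4) ty(6) ty(7)] ext[OF oS Z1[OF gen(3) gen(4) ty(6)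 ty(7)] gen(3) gen(4)] Z1[OF gen(3) s(1) ty(6) fs] ext[OF oS Z1[OF gen(3) s(1) ty(6) fs] gen(3) s(1)] Z2[OF gen(4) ek(1) ty(8) ek(2)] ext[OF oS Z2[OF gen(4) ek(1) ty(8) ek(2)] gen(4) ek(1)] Z2[OF gen(4) gen(1) ty(8) ty(1)] ext[OF oS Z2[OF gen(4) gen(1) ty(8) ty(1)] gen(4) gen(1)] Z2[OF gen(4) gen(2) ty(8) ty(3)] ext[OF oS Z2[OF gen(4) gen(2) ty(8) ty(3)] gen(4) gen(2)] Z2[OF gen(4) a(1) ty(8) tya(1)] ext[OF oS Z2[OF gen(4) a(1) ty(8) tya(1)] gen(4) a(1)] Z1[OF a(1) fR tya(2) ff] ext[OF oS Z1[OF a(1) fR tya(2) ff] a(1) fR] Z1[OF a(1) gen(3) tya(2) ty(5)] ext[OF oS Z1[OF a(1) gen(3) tya(2) ty(5)] a(1) gen(3)] Z1[OF a(1) gen(4) tya(2) ty(7)] ext[OF oS Z1[OF a(1) gen(4) tya(2) ty(7)] a(1) gen(4)] Z1[OF a(1) s(1) tya(2) fs] ext[OF oS Z1[OF a(1) s(1) tya(2) fs] a(1) s(1)] Z2[OF s(1) ek(1) s(3) ek(2)] ext[OF oS Z2[OF s(1) ek(1) s(3) ek(2)] s(1) ek(1)] Z2[OF s(1) gen(1) s(3) ty(1)] ext[OF oS Z2[OF s(1) gen(1) s(3) ty(1)] s(1) gen(1)] Z2[OF s(1) gen(2) s(3) ty(3)] ext[OF oS Z2[OF s(1) gen(2) s(3)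 ty(3)] s(1) gen(2)] Z2[OF s(1) a(1) s(3) tya(1)] ext[OF oS Z2[OF s(1) a(1) s(3) tya(1)] s(1) a(1)]
  have "s \<odot> (r \<odot> a) = (f \<boxplus> x' \<odot> s) \<odot> (r \<odot> a)" by (rule arg_cong[where f="\<lambda>t. t \<odot> (r \<odot> a)", OF s(2)])
  also have "\<dots> = r \<odot> a \<boxplus> m \<odot> s \<odot> r \<odot> a \<boxplus> r \<odot> a \<odot> q \<odot> s \<odot> r \<odot> a" unfolding x'_def using simps2 by simp
  finally have G2: "r \<odot> a \<boxplus> m \<odot> s \<odot> r \<odot> a \<boxplus> r \<odot> a \<odot> q \<odot> s \<odot> r \<odot> a = s \<odot> r \<odot> a" by simp
  have "s = f \<boxplus> x' \<odot> s" by (rule s(2))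
  also have "\<dots> = f \<boxplus> m \<odot> s \<boxplus> r \<odot> a \<odot> q \<odot> s" unfolding x'_def using simps2 by simp
  finally have G1: "f \<boxplus> m \<odot> s \<boxplus> r \<odot> a \<odot> q \<odot> s = s" by simp
  have "a \<odot> (q \<odot> s) = (e k \<boxplus> p \<odot> a) \<odot> (q \<odot> s)" using key by simp
  also have "\<dots> = q \<odot> s \<boxplus> p \<odot> a \<odot> q \<odot> s" using simps2 by simp
  finally have G3: "q \<odot> s \<boxplus> p \<odot> a \<odot> q \<odot> s = a \<odot> q \<odot> s" by simp
  have "a \<odot> (q \<odot> s \<odot> r \<odot> a) = (e k \<boxplus> p \<odot> a) \<odot> (q \<odot> s \<odot> r \<odot> a)" using key by simp
  also have "\<dots> = q \<odot> s \<odot> r \<odot> a \<boxplus> p \<odot> a \<odot> q \<odot> s \<odot> r \<odot> a" using simps2 by simp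
  finally have G4: "q \<odot> s \<odot> r \<odot> a \<boxplus> p \<odot> a \<odot> q \<odot> s \<odot> r \<odot> a = a \<odot> q \<odot> s \<odot> r \<odot> a" by simp
  define g where "g = (f \<boxplus> a \<odot> q) \<odot> s \<odot> (f \<boxplus> r \<odot> a) \<boxplus> a"
  have gR: "g \<in> RR S" unfolding g_def using simps2 by simp
  have L: "g = s \<boxplus> s \<odot> r \<odot> a \<boxplus> a \<odot> q \<odot> s \<boxplus> a \<odot> q \<odot> s \<odot> r \<odot> a \<boxplus> a"
    unfolding g_def using simps2 by (simp add: rac7)
  have "e k \<boxplus> f \<boxplus> x \<odot> g = e k \<boxplus> f \<boxplus> p \<odot> a \<odot> q \<odot> s \<boxplus> p \<odot> a \<odot> q \<odot> s \<odot> r \<odot> a \<boxplus> q \<odot> s \<boxplus> q \<odot> s \<odot> r \<odot> a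
      \<boxplus> r \<odot> a \<odot> q \<odot> s \<boxplus> r \<odot> a \<odot> q \<odot> s \<odot> r \<odot> a \<boxplus> m \<odot> s \<boxplus> m \<odot> s \<odot> r \<odot> a \<boxplus> p \<odot> a \<boxplus> r \<odot> a"
    unfolding g_def xs using simps2 by (simp add: rac7)
  also have "\<dots> = (f \<boxplus> m \<odot> s \<boxplus> r \<odot> a \<odot> q \<odot> s) \<boxplus> (r \<odot> a \<boxplus> m \<odot> s \<odot> r \<odot> a \<boxplus> r \<odot> a \<odot> q \<odot> s \<odot> r \<odot> a)
      \<boxplus> (q \<odot> s \<boxplus> p \<odot> a \<odot> q \<odot> s) \<boxplus> (q \<odot> s \<odot> r \<odot> a \<boxplus> p \<odot> a \<odot> q \<odot> s \<odot> r \<odot> a) \<boxplus> (e k \<boxplus> p \<odot> a)"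
    using simps2 by (simp add: rac7)
  also have "\<dots> = s \<boxplus> s \<odot> r \<odot> a \<boxplus> a \<odot> q \<odot> s \<boxplus> a \<odot> q \<odot> s \<odot> r \<odot> a \<boxplus> a"
    by (simp only: G1 G2 G3 G4 key)
  also have "\<dots> = g" using L by simp
  finally have G: "g = e k \<boxplus> f \<boxplus> x \<odot> g" by simp
  have GF: "g \<odot> (e k \<boxplus> f) = g" unfolding g_def using simps2 by (simp add: rac7)
  have G': "g = (e k \<boxplus> f) \<boxplus> x \<odot> g" unfolding r_aass[OF oS ek(1) fR r_mul[OF oS xR gR]] by (rule G)
  have Fk: "FF S e (k # js) = e k \<boxplus> f" unfolding f_def by (rule FF_simps(2)[OF oS])
  show ?case unfolding Fk
    apply (rule bexI[of _ g])
     apply (rule conjI)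
      apply (rule G')
     apply (rule GF)
    apply (rule gR)
    done
qed

end
end

context gc begin

lemma dsum_facts: assumes "dsum_decomp K S n Bs incl prj"
  shows "ob S" "\<And>i. i < n \<Longrightarrow> ob (Bs i)" "\<And>i. i < n \<Longrightarrow> incl i \<in> Hom K (Bs i) S"
    "\<And>i. i < n \<Longrightarrow> prj i \<in> Hom K S (Bs i)"
    "\<And>i. i < n \<Longrightarrow> cmp K (prj i) (incl i) = idm K (Bs i)"
    "\<And>i j. i < n \<Longrightarrow> j < n \<Longrightarrow> i \<noteq> j \<Longrightarrow> cmp K (prj i) (incl j) = mzero K (Bs j) (Bs i)"
    "FF S (\<lambda>i. cmp K (incl i) (prj i)) [0..<n] = idm K S"
  using assms unfolding dsum_decomp_def FF_def[OF assms[unfolded dsum_decomp_def, THEN conjunct1]] by auto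

lemma e_in: assumes D: "dsum_decomp K S n Bs incl prj" and i: "i < n"
  shows "cmp K (incl i) (prj i) \<in> Hom K S S"
  using dsum_facts[OF D] i comp by blast

lemma FF_in_d: assumes D: "dsum_decomp K S n Bs incl prj"
  shows "set js \<subseteq> {..<n} \<Longrightarrow> FF S (\<lambda>i. cmp K (incl i) (prj i)) js \<in> Hom K S S"
proof (induction js)
  case Nil then show ?case using FF_simps(1)[OF dsum_facts(1)[OF D]] mzero_in[OF dsum_facts(1)[OF D] dsum_facts(1)[OF D]] by simp
next
  case (Cons l js) then show ?case using FF_simps(2)[OF dsum_facts(1)[OF D]] e_in[OF D, of l]
      madd_in[OF dsum_facts(1)[OF D] dsum_facts(1)[OF D]] by simp
qed

lemma FF_incl: assumes D: "dsum_decomp K S n Bs incl prj" and j: "j < n" "j \<notin> set js" and js: "set js \<subseteq> {..<n}"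
  shows "cmp K (FF S (\<lambda>i. cmp K (incl i) (prj i)) js) (incl j) = mzero K (Bs j) S
       \<and> cmp K (prj j) (FF S (\<lambda>i. cmp K (incl i) (prj i)) js) = mzero K S (Bs j)"
  using j js
proof (induction js)
  case Nil
  note d = dsum_facts[OF D]
  show ?case using cmp_zero_l[OF d(2)[OF j(1)] d(1) d(1) d(3)[OF j(1)]] cmp_zero_r[OF d(1) d(1) d(2)[OF j(1)] d(4)[OF j(1)]]
    FF_simps(1)[OF d(1)] by simp
next
  case (Cons l js)
  note d = dsum_facts[OF D]
  have l: "l < n" "l \<noteq> j" using Cons by auto
  have IH: "cmp K (FF S (\<lambda>i. cmp K (incl i) (prj i)) js) (incl j) = mzero K (Bs j) S
       \<and> cmp K (prj j) (FF S (\<lambda>i. cmp K (incl i) (prj i)) js) = mzero K S (Bs j)" using Cons by auto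
  let ?e = "\<lambda>i. cmp K (incl i) (prj i)"
  have HF: "FF S ?e js \<in> Hom K S S" using FF_in_d[OF D] Cons.prems by auto
  have el: "?e l \<in> Hom K S S" using comp[OF d(1) d(2)[OF l(1)] d(1) d(4)[OF l(1)] d(3)[OF l(1)]] .
  have a1: "cmp K (?e l) (incl j) = mzero K (Bs j) S"
  proof -
    have "cmp K (?e l) (incl j) = cmp K (incl l) (cmp K (prj l) (incl j))"
      using assoc[OF d(2)[OF j(1)] d(1) d(2)[OF l(1)] d(1) d(3)[OF j(1)] d(4)[OF l(1)] d(3)[OF l(1)]] by simp
    also have "\<dots> = cmp K (incl l) (mzero K (Bs j) (Bs l))" using d(6)[OF l(1) j(1) l(2)] by simp
    also have "\<dots> = mzero K (Bs j) S" using cmp_zero_r[OF d(2)[OF j(1)] d(2)[OF l(1)] d(1) d(3)[OF l(1)]] .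
    finally show ?thesis .
  qed
  have a2: "cmp K (prj j) (?e l) = mzero K S (Bs j)"
  proof -
    have "cmp K (prj j) (?e l) = cmp K (cmp K (prj j) (incl l)) (prj l)"
      using assoc[OF d(1) d(2)[OF l(1)] d(1) d(2)[OF j(1)] d(4)[OF l(1)] d(3)[OF l(1)] d(4)[OF j(1)]] by simp
    also have "\<dots> = cmp K (mzero K (Bs l) (Bs j)) (prj l)" using d(6)[OF j(1) l(1)] l(2) by simp
    also have "\<dots> = mzero K S (Bs j)" using cmp_zero_l[OF d(1) d(2)[OF l(1)] d(2)[OF j(1)] d(4)[OF l(1)]] .
    finally show ?thesis .
  qed
  have "cmp K (FF S ?e (l # js)) (incl j) = madd K (cmp K (?e l) (incl j)) (cmp K (FF S ?e js) (incl j))"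
    using FF_simps(2)[OF d(1)] distr[OF d(2)[OF j(1)] d(1) d(1) d(3)[OF j(1)] el HF] by simp
  moreover have "cmp K (prj j) (FF S ?e (l # js)) = madd K (cmp K (prj j) (?e l)) (cmp K (prj j) (FF S ?e js))"
    using FF_simps(2)[OF d(1)] distl[OF d(1) d(1) d(2)[OF j(1)] el HF d(4)[OF j(1)]] by simp
  ultimately show ?case using a1 a2 IH hgf(5)[OF d(2)[OF j(1)] d(1)] hgf(5)[OF d(1) d(2)[OF j(1)]]
    mzero_in[OF d(2)[OF j(1)] d(1)] mzero_in[OF d(1) d(2)[OF j(1)]] by simp
qed

end

context gc begin

lemma split_FF: assumes D: "dsum_decomp K S n Bs incl prj"
  shows "distinct js \<Longrightarrow> set js \<subseteq> {..<n} \<Longrightarrow> \<exists>T i q. ob T \<and> i \<in> Hom K T S \<and> q \<in> Hom K S T \<and>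
    cmp K q i = idm K T \<and> cmp K i q = FF S (\<lambda>i. cmp K (incl i) (prj i)) js"
proof (induction js)
  case Nil
  note d = dsum_facts[OF D]
  have iR: "mzero K Z0 S \<in> Hom K Z0 S" and qR: "mzero K S Z0 \<in> Hom K S Z0" using mzero_in obZ d(1) by auto
  have 1: "cmp K (mzero K S Z0) (mzero K Z0 S) = idm K Z0"
    using comp[OF obZ d(1) obZ iR qR] idin[OF obZ] homZ1[OF obZ] by (metis singletonD)
  have 2: "cmp K (mzero K Z0 S) (mzero K S Z0) = mzero K S S" using cmp_zero_r[OF d(1) obZ d(1) iR] .
  show ?case
    apply (rule exI[of _ Z0], rule exI[of _ "mzero K Z0 S"], rule exI[of _ "mzero K S Z0"])
    using obZ iR qR 1 2 FF_simps(1)[OF d(1)] by simp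
next
  case (Cons j js)
  note d = dsum_facts[OF D]
  let ?e = "\<lambda>i. cmp K (incl i) (prj i)"
  have j: "j < n" "j \<notin> set js" and js: "distinct js" "set js \<subseteq> {..<n}" using Cons.prems by auto
  from Cons.IH[OF js] obtain T' i' q' where T': "ob T'" "i' \<in> Hom K T' S" "q' \<in> Hom K S T'"
    "cmp K q' i' = idm K T'" "cmp K i' q' = FF S ?e js" by blast
  define B where "B = Bs j"
  define \<iota> where "\<iota> = incl j"
  define \<pi> where "\<pi> = prj j"
  have B: "ob B" "\<iota> \<in> Hom K B S" "\<pi> \<in> Hom K S B" "cmp K \<pi> \<iota> = idm K B"
    unfolding B_def \<iota>_def \<pi>_def using d j by auto
  have F: "FF S ?e js \<in> Hom K S S" using FF_in_d[OF D js(2)] .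
  have Fi: "cmp K (FF S ?e js) \<iota> = mzero K B S" and pF: "cmp K \<pi> (FF S ?e js) = mzero K S B"
    using FF_incl[OF D j js(2)] unfolding B_def \<iota>_def \<pi>_def by auto
  obtain Tn i1 i2 p1 p2 where bp: "is_biprod K T' B Tn i1 i2 p1 p2" using bipx T'(1) B(1) by blast
  have b: "ob Tn" "i1 \<in> Hom K T' Tn" "i2 \<in> Hom K B Tn" "p1 \<in> Hom K Tn T'" "p2 \<in> Hom K Tn B"
    "cmp K p1 i1 = idm K T'" "cmp K p2 i2 = idm K B" "cmp K p2 i1 = mzero K T' B" "cmp K p1 i2 = mzero K B T'"
    "madd K (cmp K i1 p1) (cmp K i2 p2) = idm K Tn" using bp unfolding is_biprod_def by auto
  note o = d(1) T'(1) B(1) b(1)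
  have q'i: "cmp K q' \<iota> = mzero K B T'"
  proof -
    have "cmp K q' \<iota> = cmp K (cmp K q' i') (cmp K q' \<iota>)" using T'(4) idl[OF B(1) T'(1) comp[OF B(1) d(1) T'(1) B(2) T'(3)]] by simp
    also have "\<dots> = cmp K q' (cmp K (cmp K i' q') \<iota>)"
      using assoc[OF B(1) d(1) T'(1) d(1) B(2) T'(3) T'(2)] assoc[OF B(1) T'(1) d(1) T'(1) comp[OF B(1) d(1) T'(1) B(2) T'(3)] T'(2) T'(3)]
        assoc[OF B(1) d(1) d(1) T'(1) B(2) comp[OF d(1) T'(1) d(1) T'(3) T'(2)] T'(3)] by simp
    also have "\<dots> = mzero K B T'" using T'(5) Fi cmp_zero_r[OF B(1) d(1) T'(1) T'(3)] by simp
    finally show ?thesis .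
  qed
  have pi': "cmp K \<pi> i' = mzero K T' B"
  proof -
    have "cmp K \<pi> i' = cmp K (cmp K \<pi> i') (cmp K q' i')" using T'(4) idr[OF T'(1) B(1) comp[OF T'(1) d(1) B(1) T'(2) B(3)]] by simp
    also have "\<dots> = cmp K (cmp K \<pi> (cmp K i' q')) i'"
      using assoc[OF T'(1) d(1) T'(1) B(1) T'(2) T'(3) comp[OF T'(1) d(1) B(1) T'(2) B(3)]]
        assoc[OF T'(1) d(1) B(1) B(1) T'(2) B(3) idin[OF B(1)]]
        assoc[OF d(1) T'(1) d(1) B(1) T'(3) T'(2) B(3)] assoc[OF T'(1) d(1) d(1) B(1) T'(2) comp[OF d(1) T'(1) d(1) T'(3) T'(2)] B(3)]
        assoc[OF T'(1) d(1) T'(1) d(1) T'(2) T'(3) T'(2)] by metis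
    also have "\<dots> = mzero K T' B" using T'(5) pF cmp_zero_l[OF T'(1) d(1) B(1) T'(2)] by simp
    finally show ?thesis .
  qed
  define i where "i = madd K (cmp K i' p1) (cmp K \<iota> p2)"
  define q where "q = madd K (cmp K i1 q') (cmp K i2 \<pi>)"
  have iR: "i \<in> Hom K Tn S" unfolding i_def
    using madd_in[OF b(1) d(1) comp[OF b(1) T'(1) d(1) b(4) T'(2)] comp[OF b(1) B(1) d(1) b(5) B(2)]] .
  have qR: "q \<in> Hom K S Tn" unfolding q_def
    using madd_in[OF d(1) b(1) comp[OF d(1) T'(1) b(1) T'(3) b(2)] comp[OF d(1) B(1) b(1) B(3) b(3)]] .
  have qi': "cmp K q i' = i1"
  proof -
    have "cmp K q i' = madd K (cmp K (cmp K i1 q') i') (cmp K (cmp K i2 \<pi>) i')"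
      unfolding q_def using distr[OF T'(1) d(1) b(1) T'(2) comp[OF d(1) T'(1) b(1) T'(3) b(2)] comp[OF d(1) B(1) b(1) B(3) b(3)]] .
    also have "\<dots> = madd K (cmp K i1 (cmp K q' i')) (cmp K i2 (cmp K \<pi> i'))"
      using assoc[OF T'(1) d(1) T'(1) b(1) T'(2) T'(3) b(2)] assoc[OF T'(1) d(1) B(1) b(1) T'(2) B(3) b(3)] by simp
    also have "\<dots> = madd K i1 (mzero K T' Tn)"
      using T'(4) pi' idr[OF T'(1) b(1) b(2)] cmp_zero_r[OF T'(1) B(1) b(1) b(3)] by simp
    also have "\<dots> = i1" using hgf(6)[OF T'(1) b(1) b(2)] .
    finally show ?thesis .
  qed
  have qio: "cmp K q \<iota> = i2"
  proof -
    have "cmp K q \<iota> = madd K (cmp K (cmp K i1 q') \<iota>) (cmp K (cmp K i2 \<pi>) \<iota>)"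
      unfolding q_def using distr[OF B(1) d(1) b(1) B(2) comp[OF d(1) T'(1) b(1) T'(3) b(2)] comp[OF d(1) B(1) b(1) B(3) b(3)]] .
    also have "\<dots> = madd K (cmp K i1 (cmp K q' \<iota>)) (cmp K i2 (cmp K \<pi> \<iota>))"
      using assoc[OF B(1) d(1) T'(1) b(1) B(2) T'(3) b(2)] assoc[OF B(1) d(1) B(1) b(1) B(2) B(3) b(3)] by simp
    also have "\<dots> = madd K (mzero K B Tn) i2"
      using q'i B(4) idr[OF B(1) b(1) b(3)] cmp_zero_r[OF B(1) T'(1) b(1) b(2)] by simp
    also have "\<dots> = i2" using hgf(5)[OF B(1) b(1) b(3)] .
    finally show ?thesis .
  qed
  have ii1: "cmp K i i1 = i'"
  proof -
    have "cmp K i i1 = madd K (cmp K (cmp K i' p1) i1) (cmp K (cmp K \<iota> p2) i1)"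
      unfolding i_def using distr[OF T'(1) b(1) d(1) b(2) comp[OF b(1) T'(1) d(1) b(4) T'(2)] comp[OF b(1) B(1) d(1) b(5) B(2)]] .
    also have "\<dots> = madd K (cmp K i' (cmp K p1 i1)) (cmp K \<iota> (cmp K p2 i1))"
      using assoc[OF T'(1) b(1) T'(1) d(1) b(2) b(4) T'(2)] assoc[OF T'(1) b(1) B(1) d(1) b(2) b(5) B(2)] by simp
    also have "\<dots> = madd K i' (mzero K T' S)"
      using b(6) b(8) idr[OF T'(1) d(1) T'(2)] cmp_zero_r[OF T'(1) B(1) d(1) B(2)] by simp
    also have "\<dots> = i'" using hgf(6)[OF T'(1) d(1) T'(2)] .
    finally show ?thesis .
  qed
  have ii2: "cmp K i i2 = \<iota>"
  proof -
    have "cmp K i i2 = madd K (cmp K (cmp K i' p1) i2) (cmp K (cmp K \<iota> p2) i2)"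
      unfolding i_def using distr[OF B(1) b(1) d(1) b(3) comp[OF b(1) T'(1) d(1) b(4) T'(2)] comp[OF b(1) B(1) d(1) b(5) B(2)]] .
    also have "\<dots> = madd K (cmp K i' (cmp K p1 i2)) (cmp K \<iota> (cmp K p2 i2))"
      using assoc[OF B(1) b(1) T'(1) d(1) b(3) b(4) T'(2)] assoc[OF B(1) b(1) B(1) d(1) b(3) b(5) B(2)] by simp
    also have "\<dots> = madd K (mzero K B S) \<iota>"
      using b(7) b(9) idr[OF B(1) d(1) B(2)] cmp_zero_r[OF B(1) T'(1) d(1) T'(2)] by simp
    also have "\<dots> = \<iota>" using hgf(5)[OF B(1) d(1) B(2)] .
    finally show ?thesis .
  qed
  have qi: "cmp K q i = idm K Tn"
  proof -
    have "cmp K q i = madd K (cmp K q (cmp K i' p1)) (cmp K q (cmp K \<iota> p2))"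
      unfolding i_def using distl[OF b(1) d(1) b(1) comp[OF b(1) T'(1) d(1) b(4) T'(2)] comp[OF b(1) B(1) d(1) b(5) B(2)] qR] .
    also have "\<dots> = madd K (cmp K (cmp K q i') p1) (cmp K (cmp K q \<iota>) p2)"
      using assoc[OF b(1) T'(1) d(1) b(1) b(4) T'(2) qR] assoc[OF b(1) B(1) d(1) b(1) b(5) B(2) qR] by simp
    also have "\<dots> = idm K Tn" using qi' qio b(10) by simp
    finally show ?thesis .
  qed
  have iq: "cmp K i q = FF S ?e (j # js)"
  proof -
    have "cmp K i q = madd K (cmp K i (cmp K i1 q')) (cmp K i (cmp K i2 \<pi>))"
      unfolding q_def using distl[OF d(1) b(1) d(1) comp[OF d(1) T'(1) b(1) T'(3) b(2)] comp[OF d(1) B(1) b(1) B(3) b(3)] iR] .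
    also have "\<dots> = madd K (cmp K (cmp K i i1) q') (cmp K (cmp K i i2) \<pi>)"
      using assoc[OF d(1) T'(1) b(1) d(1) T'(3) b(2) iR] assoc[OF d(1) B(1) b(1) d(1) B(3) b(3) iR] by simp
    also have "\<dots> = madd K (FF S ?e js) (?e j)" using ii1 ii2 T'(5) unfolding \<iota>_def \<pi>_def by simp
    also have "\<dots> = FF S ?e (j # js)" using FF_simps(2)[OF d(1)] hgf(4)[OF d(1) d(1) F e_in[OF D j(1)]] by simp
    finally show ?thesis .
  qed
  show ?case using b(1) iR qR qi iq by blast
qed

end


context gc begin
context fixes S assumes oS: "ob S" begin
declare oS[simp]
lemmas [simp] = r_mul[OF oS] r_add[OF oS] r_zero[OF oS] r_one[OF oS] r_ass[OF oS] r_dl[OF oS] r_dr[OF oS]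
  r_z1[OF oS] r_z2[OF oS] r_z3[OF oS] r_z4[OF oS] r_o1[OF oS] r_o2[OF oS]
lemmas rac10 = r_ac[OF oS]

lemma FF_in2: "(\<forall>j\<in>set L. e j \<in> RR S) \<Longrightarrow> FF S e L \<in> RR S"
  by (induction L) (simp_all add: FF_simps[OF oS])

lemma FF_filter: "(\<forall>j\<in>set L. e j \<in> RR S) \<Longrightarrow> FF S e L = FF S e (filter P L) \<boxplus> FF S e (filter (\<lambda>j. \<not> P j) L)"
proof (induction L)
  case Nil then show ?case by (simp add: FF_simps[OF oS])
next
  case (Cons k L)
  have I: "\<forall>j\<in>set L. e j \<in> RR S" using Cons.prems by simp
  have ek: "e k \<in> RR S" using Cons.prems by simp
  have R1: "FF S e (filter P L) \<in> RR S" "FF S e (filter (\<lambda>j. \<not> P j) L) \<in> RR S" using FF_in2 I by auto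
  show ?case using Cons.IH[OF I] ek R1 by (cases "P k") (simp_all add: FF_simps[OF oS] rac10)
qed

lemma FF_disj: "(\<forall>j\<in>set L1. \<forall>k\<in>set L2. e j \<odot> e k = zz S) \<Longrightarrow> (\<forall>j\<in>set L1. e j \<in> RR S) \<Longrightarrow> (\<forall>j\<in>set L2. e j \<in> RR S)
  \<Longrightarrow> FF S e L1 \<odot> FF S e L2 = zz S"
proof (induction L1)
  case Nil then show ?case using FF_in2 by (simp add: FF_simps[OF oS])
next
  case (Cons k L1)
  have "e k \<odot> FF S e L2 = zz S"
    using Cons.prems by (induction L2) (simp_all add: FF_simps[OF oS] FF_in2)
  then show ?case using Cons FF_in2 by (simp add: FF_simps[OF oS])
qed

lemma push_FF_zero: "ob C \<Longrightarrow> \<delta> \<in> Ext K C S \<Longrightarrow> (\<forall>j\<in>set L. e j \<in> RR S \<and> push K (e j) \<delta> = ezero K C S) \<Longrightarrow>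
  push K (FF S e L) \<delta> = ezero K C S"
proof (induction L)
  case Nil then show ?case using push_mzero[OF Nil(1) oS oS Nil(2)] by (simp add: FF_simps[OF oS])
next
  case (Cons k L)
  have "push K (FF S e (k # L)) \<delta> = eadd K (push K (e k) \<delta>) (push K (FF S e L) \<delta>)"
    using push_madd[OF Cons.prems(1) oS oS _ FF_in2 Cons.prems(2)] Cons.prems(3) by (simp add: FF_simps[OF oS])
  then show ?case using Cons egf(5)[OF Cons.prems(1) oS] egf(1)[OF Cons.prems(1) oS] by simp
qed

end
end

context gc begin

lemma sandwich: assumes o: "ob S" "ob B" and i: "\<iota> \<in> Hom K B S" and p: "\<pi> \<in> Hom K S B"
  and pi: "cmp K \<pi> \<iota> = idm K B" and c: "c \<in> Hom K B B" and h: "h \<in> Hom K B B"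
  shows "cmp K (cmp K \<iota> (cmp K c \<pi>)) (cmp K \<iota> (cmp K h \<pi>)) = cmp K \<iota> (cmp K (cmp K c h) \<pi>)"
proof -
  have cp: "cmp K c \<pi> \<in> Hom K S B" using comp[OF o(1) o(2) o(2) p c] .
  have hp: "cmp K h \<pi> \<in> Hom K S B" using comp[OF o(1) o(2) o(2) p h] .
  have "cmp K (cmp K \<iota> (cmp K c \<pi>)) (cmp K \<iota> (cmp K h \<pi>)) = cmp K \<iota> (cmp K (cmp K c \<pi>) (cmp K \<iota> (cmp K h \<pi>)))"
    using assoc[OF o(1) o(1) o(2) o(1) comp[OF o(1) o(2) o(1) hp i] cp i] by simp
  also have "cmp K (cmp K c \<pi>) (cmp K \<iota> (cmp K h \<pi>)) = cmp K c (cmp K \<pi> (cmp K \<iota> (cmp K h \<pi>)))"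
    using assoc[OF o(1) o(1) o(2) o(2) comp[OF o(1) o(2) o(1) hp i] p c] by simp
  also have "cmp K \<pi> (cmp K \<iota> (cmp K h \<pi>)) = cmp K h \<pi>"
    using assoc[OF o(1) o(2) o(1) o(2) hp i p] pi idl[OF o(1) o(2) hp] by simp
  also have "cmp K c (cmp K h \<pi>) = cmp K (cmp K c h) \<pi>"
    using assoc[OF o(1) o(2) o(2) o(2) p h c] .
  finally show ?thesis .
qed

lemma loc_d: assumes D: "dsum_decomp K S n Bs incl prj" and j: "j < n" and L: "local_obj K (Bs j)"
  shows "loc S (\<lambda>i. cmp K (incl i) (prj i)) j"
proof -
  note d = dsum_facts[OF D]
  define B where "B = Bs j"
  define \<iota> where "\<iota> = incl j"
  define \<pi> where "\<pi> = prj j"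
  have B: "ob B" "\<iota> \<in> Hom K B S" "\<pi> \<in> Hom K S B" "cmp K \<pi> \<iota> = idm K B"
    unfolding B_def \<iota>_def \<pi>_def using d j by auto
  note o = d(1) B(1)
  have LB: "idm K B \<noteq> mzero K B B" "\<And>f. f \<in> Hom K B B \<Longrightarrow> Defs.iso K B B f \<or> Defs.iso K B B (madd K (idm K B) (mneg K f))"
    using L unfolding local_obj_def B_def by auto
  let ?e = "\<lambda>i. cmp K (incl i) (prj i)"
  have eR: "?e j \<in> Hom K S S" using e_in[OF D j] .
  have ej: "?e j = cmp K \<iota> (cmp K (idm K B) \<pi>)" unfolding \<iota>_def \<pi>_def B_def using idl[OF o(1) o(2) B(3)] B(3) unfolding \<pi>_def B_def by simp
  have idem: "cmp K (?e j) (?e j) = ?e j"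
    using sandwich[OF o B(2,3,4) idin[OF B(1)] idin[OF B(1)]] ej idl[OF B(1) B(1) idin[OF B(1)]] by simp
  have nz: "?e j \<noteq> mzero K S S"
  proof
    assume z: "?e j = mzero K S S"
    have "idm K B = cmp K \<pi> (cmp K (cmp K \<iota> \<pi>) \<iota>)"
      using assoc[OF o(2) o(1) o(2) o(1) B(2) B(3) B(2)] B(4) idl[OF o(2) o(2) idin[OF o(2)]] idr[OF o(2) o(1) B(2)]
      by (metis B(1) B(2) idl)
    also have "\<dots> = mzero K B B" using z cmp_zero_l[OF o(2) o(1) o(1) B(2)] cmp_zero_r[OF o(2) o(1) o(2) B(3)]
      unfolding \<iota>_def \<pi>_def by simp
    finally show False using LB(1) by simp
  qed
  have cu: "\<And>c. c \<in> Hom K B B \<Longrightarrow> Defs.iso K B B c \<Longrightarrow> cunit S ?e j (cmp K \<iota> (cmp K c \<pi>))"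
  proof -
    fix c assume c: "c \<in> Hom K B B" "Defs.iso K B B c"
    obtain h where h: "h \<in> Hom K B B" "cmp K h c = idm K B" "cmp K c h = idm K B"
      using c(2) unfolding iso_def by blast
    have R: "cmp K \<iota> (cmp K c \<pi>) \<in> Hom K S S" using comp[OF o(1) o(2) o(1) comp[OF o(1) o(2) o(2) B(3) c(1)] B(2)] .
    have Rh: "cmp K \<iota> (cmp K h \<pi>) \<in> Hom K S S" using comp[OF o(1) o(2) o(1) comp[OF o(1) o(2) o(2) B(3) h(1)] B(2)] .
    have s1: "cmp K (?e j) (cmp K (cmp K \<iota> (cmp K c \<pi>)) (?e j)) = cmp K \<iota> (cmp K c \<pi>)"
      using sandwich[OF o B(2,3,4) c(1) idin[OF B(1)]] sandwich[OF o B(2,3,4) idin[OF B(1)] c(1)]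
        idl[OF B(1) B(1) c(1)] idr[OF B(1) B(1) c(1)] ej by simp
    have s2: "cmp K (?e j) (cmp K (cmp K \<iota> (cmp K h \<pi>)) (?e j)) = cmp K \<iota> (cmp K h \<pi>)"
      using sandwich[OF o B(2,3,4) h(1) idin[OF B(1)]] sandwich[OF o B(2,3,4) idin[OF B(1)] h(1)]
        idl[OF B(1) B(1) h(1)] idr[OF B(1) B(1) h(1)] ej by simp
    have s3: "cmp K (cmp K \<iota> (cmp K c \<pi>)) (cmp K \<iota> (cmp K h \<pi>)) = ?e j"
      using sandwich[OF o B(2,3,4) c(1) h(1)] h(3) ej by simp
    have s4: "cmp K (cmp K \<iota> (cmp K h \<pi>)) (cmp K \<iota> (cmp K c \<pi>)) = ?e j"
      using sandwich[OF o B(2,3,4) h(1) c(1)] h(2) ej by simp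
    have a1: "cmp K (?e j) (cmp K (cmp K \<iota> (cmp K c \<pi>)) (?e j)) = cmp K (cmp K (?e j) (cmp K \<iota> (cmp K c \<pi>))) (?e j)"
      using assoc[OF o(1) o(1) o(1) o(1) eR R eR] .
    show "cunit S ?e j (cmp K \<iota> (cmp K c \<pi>))"
      unfolding cunit_def[OF o(1)]
      using R Rh s1 s2 s3 s4 by (intro conjI bexI[of _ "cmp K \<iota> (cmp K h \<pi>)"]) (simp_all add: r_ass[OF o(1)] eR)
  qed
  have lc: "\<forall>z\<in>Hom K S S. cunit S ?e j (cmp K (?e j) (cmp K z (?e j))) \<or>
      (\<exists>t. cunit S ?e j t \<and> madd K t (cmp K (?e j) (cmp K z (?e j))) = ?e j)"
  proof
    fix z assume z: "z \<in> Hom K S S"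
    define g where "g = cmp K \<pi> (cmp K z \<iota>)"
    have g: "g \<in> Hom K B B" unfolding g_def using comp[OF o(2) o(1) o(2) comp[OF o(2) o(1) o(1) B(2) z] B(3)] .
    have ez: "cmp K (?e j) (cmp K z (?e j)) = cmp K \<iota> (cmp K g \<pi>)"
    proof -
      have "cmp K (?e j) (cmp K z (?e j)) = cmp K \<iota> (cmp K \<pi> (cmp K z (cmp K \<iota> \<pi>)))"
        unfolding \<iota>_def \<pi>_def using assoc[OF o(1) o(1) o(2) o(1) comp[OF o(1) o(1) o(1) eR z] B(3) B(2)] eR z
        unfolding \<iota>_def \<pi>_def by (simp add: r_ass[OF o(1)])
      also have "\<dots> = cmp K \<iota> (cmp K g \<pi>)" unfolding g_def
        using assoc[OF o(1) o(2) o(1) o(1) B(3) B(2) z] assoc[OF o(1) o(2) o(1) o(2) B(3) comp[OF o(2) o(1) o(1) B(2) z] B(3)]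
        by simp
      finally show ?thesis .
    qed
    from LB(2)[OF g] show "cunit S ?e j (cmp K (?e j) (cmp K z (?e j))) \<or>
      (\<exists>t. cunit S ?e j t \<and> madd K t (cmp K (?e j) (cmp K z (?e j))) = ?e j)"
    proof
      assume "Defs.iso K B B g" thus ?thesis using cu[OF g] ez by simp
    next
      define c where "c = madd K (idm K B) (mneg K g)"
      have c: "c \<in> Hom K B B" unfolding c_def using madd_in[OF o(2) o(2) idin[OF o(2)] mneg_in[OF o(2) o(2) g]] .
      have cg: "madd K c g = idm K B" unfolding c_def
        using hgf(3)[OF o(2) o(2) idin[OF o(2)] mneg_in[OF o(2) o(2) g] g] hgf(8)[OF o(2) o(2) g] hgf(6)[OF o(2) o(2) idin[OF o(2)]]
        by simp
      assume "Defs.iso K B B (madd K (idm K B) (mneg K g))"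
      hence cu2: "cunit S ?e j (cmp K \<iota> (cmp K c \<pi>))" using cu[OF c] unfolding c_def by simp
      have "madd K (cmp K \<iota> (cmp K c \<pi>)) (cmp K \<iota> (cmp K g \<pi>)) = cmp K \<iota> (cmp K (madd K c g) \<pi>)"
        using distl[OF o(1) o(2) o(1) comp[OF o(1) o(2) o(2) B(3) c] comp[OF o(1) o(2) o(2) B(3) g] B(2)]
          distr[OF o(1) o(2) o(2) B(3) c g] by simp
      also have "\<dots> = ?e j" using cg ej by simp
      finally have eq: "madd K (cmp K \<iota> (cmp K c \<pi>)) (cmp K \<iota> (cmp K g \<pi>)) = ?e j" .
      show ?thesis unfolding ez using cu2 eq by blast
    qed
  qed
  show ?thesis unfolding loc_def[OF o(1)] using eR idem nz lc by blast
qed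

end

context gc begin

lemma orth_d: assumes D: "dsum_decomp K S n Bs incl prj" and jk: "j < n" "k < n" "j \<noteq> k"
  shows "cmp K (cmp K (incl j) (prj j)) (cmp K (incl k) (prj k)) = mzero K S S"
proof -
  note d = dsum_facts[OF D]
  have "cmp K (cmp K (incl j) (prj j)) (cmp K (incl k) (prj k)) = cmp K (incl j) (cmp K (prj j) (cmp K (incl k) (prj k)))"
    using assoc[OF d(1) d(1) d(2)[OF jk(1)] d(1) e_in[OF D jk(2)] d(4)[OF jk(1)] d(3)[OF jk(1)]] by simp
  also have "cmp K (prj j) (cmp K (incl k) (prj k)) = cmp K (cmp K (prj j) (incl k)) (prj k)"
    using assoc[OF d(1) d(2)[OF jk(2)] d(1) d(2)[OF jk(1)] d(4)[OF jk(2)] d(3)[OF jk(2)] d(4)[OF jk(1)]] .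
  also have "\<dots> = mzero K S (Bs j)" using d(6)[OF jk] cmp_zero_l[OF d(1) d(2)[OF jk(2)] d(2)[OF jk(1)] d(4)[OF jk(2)]] by simp
  also have "cmp K (incl j) (mzero K S (Bs j)) = mzero K S S" using cmp_zero_r[OF d(1) d(2)[OF jk(1)] d(1) d(3)[OF jk(1)]] .
  finally show ?thesis .
qed

lemma HH_d: assumes D: "dsum_decomp K S n Bs incl prj" and L: "\<forall>i<n. local_obj K (Bs i)"
  and dl: "distinct js" "set js \<subseteq> {..<n}"
  shows "HH S (\<lambda>i. cmp K (incl i) (prj i)) js"
  unfolding HH_def[OF dsum_facts(1)[OF D]] using dl loc_d[OF D] L orth_d[OF D] by (auto simp: subset_iff)

definition univ :: "'o set \<Rightarrow> 'o \<Rightarrow> 'o \<Rightarrow> 'e \<Rightarrow> bool" where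
  "univ XX C S \<delta> \<longleftrightarrow> \<delta> \<in> Ext K C S \<and> (\<forall>X'\<in>XX. \<forall>\<epsilon>\<in>Ext K C X'. \<exists>h\<in>Hom K S X'. \<epsilon> = push K h \<delta>)"

lemma univ_push: assumes u: "univ XX C S \<delta>" and XO: "XX \<subseteq> Ob K" and o: "ob C" "ob S" "ob S'"
  and r: "r \<in> Hom K S' S" and d: "\<delta>'' \<in> Ext K C S'" and eq: "\<delta> = push K r \<delta>''"
  shows "univ XX C S' \<delta>''"
  unfolding univ_def
proof (intro conjI d ballI)
  fix X' \<epsilon> assume X': "X' \<in> XX" and e: "\<epsilon> \<in> Ext K C X'"
  have oX: "ob X'" using X' XO by auto
  obtain h where h: "h \<in> Hom K S X'" "\<epsilon> = push K h \<delta>" using u X' e unfolding univ_def by blast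
  have "\<epsilon> = push K (cmp K h r) \<delta>''" using h eq push_cmp[OF o(1) o(3) o(2) oX r h(1) d] by simp
  then show "\<exists>h\<in>Hom K S' X'. \<epsilon> = push K h \<delta>''" using comp[OF o(3) o(2) oX r h(1)] by blast
qed

end

context gc begin
context fixes S assumes oS: "ob S" begin
declare oS[simp]
lemmas [simp] = r_mul[OF oS] r_add[OF oS] r_zero[OF oS] r_one[OF oS] r_ass[OF oS] r_dl[OF oS] r_dr[OF oS]
  r_z1[OF oS] r_z2[OF oS] r_z3[OF oS] r_z4[OF oS] r_o1[OF oS] r_o2[OF oS]
lemmas rac12 = r_ac[OF oS]

lemma filter_single: "l < n \<Longrightarrow> filter (\<lambda>i. \<not> i \<noteq> l) [0..<n] = [l]"
  by (induction n) auto

lemma reduce: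
  assumes ed: "e = (\<lambda>i. cmp K (incl i) (prj i))" and D: "dsum_decomp K S n Bs incl prj" and L: "\<forall>i<n. local_obj K (Bs i)" and XO: "XX \<subseteq> Ob K"
    and C: "ob C" and u: "univ XX C S \<delta>" and l: "l < n" and x: "x \<in> RR S"
    and px: "push K x \<delta> = ezero K C S" and j: "j < n" and y0: "y0 \<in> RR S"
    and cu: "cunit S e l (e l \<odot> y0 \<odot> e j \<odot> x \<odot> e l)"
  shows "\<exists>dd2. univ XX C S dd2 \<and> {i. i < n \<and> push K (e i) dd2 \<noteq> ezero K C S}
     = {i. i < n \<and> push K (e i) \<delta> \<noteq> ezero K C S} - {l}"
proof -
  have eR: "\<And>i. i < n \<Longrightarrow> e i \<in> RR S" unfolding ed using e_in[OF D] by blast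
  note el = loc_e[OF oS loc_d[OF D l L[rule_format, OF l], folded ed]]
  have dl: "\<delta> \<in> Ext K C S" using u unfolding univ_def by blast
  obtain w where w: "w \<in> RR S" "e l \<odot> y0 \<odot> e j \<odot> x \<odot> e l \<odot> w = e l" "w \<odot> e l \<odot> y0 \<odot> e j \<odot> x \<odot> e l = e l"
    using cu el(1) eR[OF j] y0 x unfolding cunit_def[OF oS] by auto
  define M where "M = w \<odot> e l \<odot> y0 \<odot> e j"
  have MR: "M \<in> RR S" unfolding M_def using w(1) el(1) y0 eR[OF j] by simp
  have Mxl: "M \<odot> x \<odot> e l = e l" unfolding M_def using w(3) w(1) el(1) y0 eR[OF j] x by simp
  define Lq where "Lq = filter (\<lambda>i. i \<noteq> l) [0..<n]"
  have HLq: "HH S e Lq" unfolding Lq_def ed by (rule HH_d[OF D L]) auto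
  define Q where "Q = FF S e Lq"
  have QR: "Q \<in> RR S" unfolding Q_def using FF_in[OF oS HLq] .
  have allR: "\<forall>i\<in>set [0..<n]. e i \<in> RR S" using eR by simp
  have "one S = FF S e [0..<n]" using dsum_facts(7)[OF D] unfolding ed by simp
  also have "\<dots> = FF S e Lq \<boxplus> FF S e [l]" unfolding Lq_def using FF_filter[OF oS allR, of "\<lambda>i. i \<noteq> l"] filter_single[OF l] by simp
  finally have Ql: "Q \<boxplus> e l = one S" unfolding Q_def using el(1) FF_simps[OF oS] by simp
  have QQ: "Q \<odot> Q = Q" unfolding Q_def using FF_idem2[OF oS HLq] .
  have orthl: "\<forall>i\<in>set Lq. e i \<in> RR S \<and> e l \<odot> e i = zz S \<and> e i \<odot> e l = zz S"
    using HLq l el(1) unfolding HH_def[OF oS] Lq_def ed using orth_d[OF D] e_in[OF D] by auto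
  have lQ: "e l \<odot> Q = zz S" "Q \<odot> e l = zz S" using FF_orth[OF oS el(1) orthl] unfolding Q_def by auto
  have iQ: "\<And>i. i < n \<Longrightarrow> i \<noteq> l \<Longrightarrow> e i \<odot> Q = e i"
    unfolding Q_def using FF_idem[OF oS HLq] unfolding Lq_def by simp
  define dd2 where "dd2 = push K Q \<delta>"
  have d2: "dd2 \<in> Ext K C S" unfolding dd2_def using push_in[OF C oS oS QR dl] .
  have pM: "push K (M \<odot> x) \<delta> = ezero K C S"
    using push_cmp[OF C oS oS oS x MR dl] px push_ezero[OF C oS oS MR] by simp
  have "M \<odot> x = M \<odot> x \<odot> one S" using MR x by simp
  also have "\<dots> = M \<odot> x \<odot> (Q \<boxplus> e l)" using Ql by simp
  also have "\<dots> = M \<odot> x \<odot> Q \<boxplus> e l" using MR x QR el(1) Mxl by simp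
  finally have Mx: "M \<odot> x = M \<odot> x \<odot> Q \<boxplus> e l" .
  define P where "P = M \<odot> x \<odot> Q"
  have PR: "P \<in> RR S" unfolding P_def using MR x QR by simp
  have PQ: "P \<odot> Q = P" unfolding P_def using MR x QR QQ ext[OF oS QQ] by simp
  define N where "N = mneg K P"
  have NR: "N \<in> RR S" unfolding N_def using mneg_in[OF oS oS PR] .
  have NP: "N \<boxplus> P = zz S" unfolding N_def using hgf(8)[OF oS oS PR] .
  define R' where "R' = Q \<boxplus> N \<odot> Q"
  have R'R: "R' \<in> RR S" unfolding R'_def using QR NR by simp
  have R'Q: "R' \<odot> Q = Q \<boxplus> N \<odot> Q" unfolding R'_def using QR NR QQ ext[OF oS QQ] by simp
  note EG = egf[OF C oS]
  have pP: "push K P \<delta> \<in> Ext K C S" using push_in[OF C oS oS PR dl] .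
  have pel: "push K (e l) \<delta> \<in> Ext K C S" using push_in[OF C oS oS el(1) dl] .
  have pNQ: "push K (N \<odot> Q) \<delta> \<in> Ext K C S" using push_in[OF C oS oS r_mul[OF oS NR QR] dl] .
  have s1: "eadd K (push K P \<delta>) (push K (N \<odot> Q) \<delta>) = ezero K C S"
  proof -
    have "(N \<boxplus> P) \<odot> Q = N \<odot> Q \<boxplus> P" using NR PR QR PQ by simp
    hence "N \<odot> Q \<boxplus> P = zz S" using NP QR by simp
    hence "push K (N \<odot> Q \<boxplus> P) \<delta> = ezero K C S" using push_mzero[OF C oS oS dl] by simp
    thus ?thesis using push_madd[OF C oS oS r_mul[OF oS NR QR] PR dl] EG(4)[OF pP pNQ] by simp
  qed
  have s2: "eadd K (push K P \<delta>) (push K (e l) \<delta>) = ezero K C S"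
    using push_madd[OF C oS oS PR el(1) dl] pM Mx unfolding P_def by simp
  have NQl: "push K (N \<odot> Q) \<delta> = push K (e l) \<delta>"
    using ab_grp_cancel[OF eg[OF C oS] pP pNQ pel] s1 s2 by simp
  have "push K R' dd2 = push K (R' \<odot> Q) \<delta>" unfolding dd2_def using push_cmp[OF C oS oS oS QR R'R dl] by simp
  also have "\<dots> = eadd K (push K Q \<delta>) (push K (N \<odot> Q) \<delta>)" using R'Q push_madd[OF C oS oS QR r_mul[OF oS NR QR] dl] by simp
  also have "\<dots> = push K (Q \<boxplus> e l) \<delta>" using NQl push_madd[OF C oS oS QR el(1) dl] by simp
  also have "\<dots> = \<delta>" using Ql push_id[OF C oS dl] by simp
  finally have bk: "\<delta> = push K R' dd2" by simp
  have U: "univ XX C S dd2" using univ_push[OF u XO C oS oS R'R d2 bk] .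
  have "{i. i < n \<and> push K (e i) dd2 \<noteq> ezero K C S} = {i. i < n \<and> push K (e i) \<delta> \<noteq> ezero K C S} - {l}"
  proof -
    have "\<And>i. i < n \<Longrightarrow> push K (e i) dd2 = push K (e i \<odot> Q) \<delta>"
      unfolding dd2_def using push_cmp[OF C oS oS oS QR eR dl] by simp
    moreover have "push K (e l \<odot> Q) \<delta> = ezero K C S" using lQ push_mzero[OF C oS oS dl] by simp
    ultimately have "\<And>i. i < n \<Longrightarrow> push K (e i) dd2 = (if i = l then ezero K C S else push K (e i) \<delta>)"
      using iQ by auto
    then show ?thesis using l by (auto split: if_splits)
  qed
  then show ?thesis using U by blast
qed

end
end

context gc begin

lemma kill: assumes o: "ob T" "ob T'" "ob S" and i: "i \<in> Hom K T S" and q: "q \<in> Hom K S T"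
  and i': "i' \<in> Hom K T' S" and q': "q' \<in> Hom K S T'" and qi: "cmp K q i = idm K T" and qi': "cmp K q' i' = idm K T'"
  and z: "cmp K (cmp K i' q') (cmp K i q) = mzero K S S"
  shows "cmp K q' i = mzero K T T'"
proof -
  have iq: "cmp K i q \<in> Hom K S S" using comp[OF o(3) o(1) o(3) q i] .
  have iq': "cmp K i' q' \<in> Hom K S S" using comp[OF o(3) o(2) o(3) q' i'] .
  have 1: "cmp K (cmp K i q) i = i" using assoc[OF o(1) o(3) o(1) o(3) i q i] qi idr[OF o(1) o(3) i] by simp
  have 2: "cmp K q' (cmp K i' q') = q'" using assoc[OF o(3) o(2) o(3) o(2) q' i' q'] qi' idl[OF o(3) o(2) q'] by simp
  have "cmp K q' i = cmp K (cmp K q' (cmp K i' q')) (cmp K (cmp K i q) i)" using 1 2 by simp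
  also have "\<dots> = cmp K q' (cmp K (cmp K i' q') (cmp K (cmp K i q) i))"
    using assoc[OF o(1) o(3) o(3) o(2) comp[OF o(1) o(3) o(3) i iq] iq' q'] by simp
  also have "cmp K (cmp K i' q') (cmp K (cmp K i q) i) = cmp K (cmp K (cmp K i' q') (cmp K i q)) i"
    using assoc[OF o(1) o(3) o(3) o(3) i iq iq'] .
  also have "\<dots> = mzero K T S" using z cmp_zero_l[OF o(1) o(3) o(3) i] by simp
  also have "cmp K q' (mzero K T S) = mzero K T T'" using cmp_zero_r[OF o(1) o(3) o(2) q'] .
  finally show ?thesis .
qed

lemma minimal:
  assumes D: "dsum_decomp K S n Bs incl prj" and L: "\<forall>i<n. local_obj K (Bs i)" and XO: "XX \<subseteq> Ob K"
    and sc: "summand_closed K XX" and SX: "S \<in> XX" and C: "ob C" and u0: "univ XX C S \<delta>0"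
  shows "\<exists>T \<delta>'. T \<in> XX \<and> univ XX C T \<delta>' \<and> (\<forall>\<phi>\<in>Hom K T T. push K \<phi> \<delta>' = \<delta>' \<longrightarrow> (\<exists>\<rho>\<in>Hom K T T. cmp K \<phi> \<rho> = idm K T))"
proof -
  have oS: "ob S" using dsum_facts(1)[OF D] .
  define e where "e = (\<lambda>i. cmp K (incl i) (prj i))"
  have eR: "\<And>i. i < n \<Longrightarrow> e i \<in> RR S" unfolding e_def using e_in[OF D] by blast
  define \<mu> where "\<mu> = (\<lambda>\<delta>. card {i. i < n \<and> push K (e i) \<delta> \<noteq> ezero K C S})"
  obtain \<delta> where u: "univ XX C S \<delta>" and mn: "\<And>\<delta>2. univ XX C S \<delta>2 \<Longrightarrow> \<mu> \<delta> \<le> \<mu> \<delta>2"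
    using ex_has_least_nat[of "univ XX C S" \<delta>0 \<mu>] u0 by blast
  have dl: "\<delta> \<in> Ext K C S" using u unfolding univ_def by blast
  define J where "J = {i. i < n \<and> push K (e i) \<delta> \<noteq> ezero K C S}"
  define js where "js = filter (\<lambda>i. i \<in> J) [0..<n]"
  define js' where "js' = filter (\<lambda>i. i \<notin> J) [0..<n]"
  have jsd: "distinct js" "set js \<subseteq> {..<n}" "distinct js'" "set js' \<subseteq> {..<n}" unfolding js_def js'_def by auto
  obtain T i q where Tq: "ob T" "i \<in> Hom K T S" "q \<in> Hom K S T" "cmp K q i = idm K T" "cmp K i q = FF S e js"
    using split_FF[OF D jsd(1,2)] unfolding e_def by blast
  obtain T' i' q' where Tq': "ob T'" "i' \<in> Hom K T' S" "q' \<in> Hom K S T'" "cmp K q' i' = idm K T'" "cmp K i' q' = FF S e js'"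
    using split_FF[OF D jsd(3,4)] unfolding e_def by blast
  define f where "f = FF S e js"
  define f' where "f' = FF S e js'"
  have allR: "\<forall>j\<in>set [0..<n]. e j \<in> RR S" using eR by simp
  have fR: "f \<in> RR S" "f' \<in> RR S" unfolding f_def f'_def using FF_in2[OF oS] eR jsd by (auto simp: subset_iff)
  have ff': "madd K f f' = idm K S"
    using FF_filter[OF oS allR, of "\<lambda>i. i \<in> J"] dsum_facts(7)[OF D] unfolding f_def f'_def js_def js'_def e_def by simp
  have pf': "push K f' \<delta> = ezero K C S" unfolding f'_def
    by (rule push_FF_zero[OF oS C dl]) (auto simp: js'_def J_def eR)
  have pf: "push K f \<delta> = \<delta>"
  proof -
    have "\<delta> = push K (madd K f f') \<delta>" using ff' push_id[OF C oS dl] by simp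
    also have "\<dots> = eadd K (push K f \<delta>) (push K f' \<delta>)" using push_madd[OF C oS oS fR dl] .
    also have "\<dots> = push K f \<delta>" using pf' egf(6)[OF C oS push_in[OF C oS oS fR(1) dl]] by simp
    finally show ?thesis by simp
  qed
  have orthJ: "\<And>a b. a < n \<Longrightarrow> b < n \<Longrightarrow> a \<noteq> b \<Longrightarrow> cmp K (e a) (e b) = mzero K S S"
    unfolding e_def using orth_d[OF D] by blast
  have disj: "cmp K f' f = mzero K S S" "cmp K f f' = mzero K S S" unfolding f_def f'_def
    by (rule FF_disj[OF oS], auto simp: js_def js'_def eR intro!: orthJ)+
  have bp: "is_biprod K T T' S i i' q q'"
    unfolding is_biprod_def
    using Tq Tq' oS kill[OF Tq(1) Tq'(1) oS Tq(2,3) Tq'(2,3) Tq(4) Tq'(4)] kill[OF Tq'(1) Tq(1) oS Tq'(2,3) Tq(2,3) Tq'(4) Tq(4)]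
      disj ff' unfolding f_def f'_def by simp
  have TX: "T \<in> XX" using sc bp SX unfolding summand_closed_def by blast
  define \<delta>' where "\<delta>' = push K q \<delta>"
  have d': "\<delta>' \<in> Ext K C T" unfolding \<delta>'_def using push_in[OF C oS Tq(1) Tq(3) dl] .
  have dd: "\<delta> = push K i \<delta>'" unfolding \<delta>'_def using push_cmp[OF C oS Tq(1) oS Tq(3) Tq(2) dl] Tq(5) pf f_def by simp
  have U: "univ XX C T \<delta>'" using univ_push[OF u XO C oS Tq(1) Tq(2) d' dd] .
  have HJ: "HH S e js" unfolding e_def using HH_d[OF D L jsd(1,2)] .
  have MIN: "\<forall>\<phi>\<in>Hom K T T. push K \<phi> \<delta>' = \<delta>' \<longrightarrow> (\<exists>\<rho>\<in>Hom K T T. cmp K \<phi> \<rho> = idm K T)"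
  proof (intro ballI impI)
    fix \<phi> assume ph: "\<phi> \<in> Hom K T T" and pph: "push K \<phi> \<delta>' = \<delta>'"
    note oT = Tq(1)
    define c where "c = madd K (idm K T) (mneg K \<phi>)"
    have cR: "c \<in> Hom K T T" unfolding c_def using madd_in[OF oT oT idin[OF oT] mneg_in[OF oT oT ph]] .
    have cph: "madd K c \<phi> = idm K T" unfolding c_def
      using hgf(3)[OF oT oT idin[OF oT] mneg_in[OF oT oT ph] ph] hgf(8)[OF oT oT ph] hgf(6)[OF oT oT idin[OF oT]] by simp
    define x where "x = cmp K i (cmp K c q)"
    define y where "y = cmp K i (cmp K \<phi> q)"
    have cq: "cmp K c q \<in> Hom K S T" using comp[OF oS oT oT Tq(3) cR] .
    have pq: "cmp K \<phi> q \<in> Hom K S T" using comp[OF oS oT oT Tq(3) ph] .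
    have xR: "x \<in> RR S" unfolding x_def using comp[OF oS oT oS cq Tq(2)] .
    have yR: "y \<in> RR S" unfolding y_def using comp[OF oS oT oS pq Tq(2)] .
    have xy: "madd K x y = f"
    proof -
      have "madd K x y = cmp K i (madd K (cmp K c q) (cmp K \<phi> q))" unfolding x_def y_def
        using distl[OF oS oT oS cq pq Tq(2)] by simp
      also have "madd K (cmp K c q) (cmp K \<phi> q) = q" using distr[OF oS oT oT Tq(3) cR ph] cph idl[OF oS oT Tq(3)] by simp
      finally show ?thesis using Tq(5) f_def by simp
    qed
    have py: "push K y \<delta> = \<delta>"
    proof -
      have "push K y \<delta> = push K i (push K (cmp K \<phi> q) \<delta>)" unfolding y_def using push_cmp[OF C oS oT oS pq Tq(2) dl] .
      also have "push K (cmp K \<phi> q) \<delta> = push K \<phi> \<delta>'" unfolding \<delta>'_def using push_cmp[OF C oS oT oT Tq(3) ph dl] .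
      finally show ?thesis using pph dd by simp
    qed
    have px: "push K x \<delta> = ezero K C S"
    proof -
      have "eadd K (push K x \<delta>) (push K y \<delta>) = push K f \<delta>" using push_madd[OF C oS oS xR yR dl] xy by simp
      hence "eadd K (push K x \<delta>) \<delta> = \<delta>" using py pf by simp
      thus ?thesis using ab_grp_cancel_r[OF eg[OF C oS] push_in[OF C oS oS xR dl] dl] by simp
    qed
    have fxf: "f \<odot> x \<odot> f = x"
    proof -
      have s1: "cmp K (cmp K i (cmp K c q)) (cmp K i (cmp K (idm K T) q)) = cmp K i (cmp K (cmp K c (idm K T)) q)"
        using sandwich[OF oS oT Tq(2,3,4) cR idin[OF oT]] .
      have s2: "cmp K (cmp K i (cmp K (idm K T) q)) (cmp K i (cmp K c q)) = cmp K i (cmp K (cmp K (idm K T) c) q)"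
        using sandwich[OF oS oT Tq(2,3,4) idin[OF oT] cR] .
      have iq: "cmp K i (cmp K (idm K T) q) = f" using idl[OF oS oT Tq(3)] Tq(5) f_def by simp
      have xf: "x \<odot> f = x" using s1 iq idr[OF oT oT cR] unfolding x_def by simp
      have fx0: "f \<odot> x = x" using s2 iq idl[OF oT oT cR] unfolding x_def by simp
      show ?thesis using xf fx0 by simp
    qed
    have rad: "\<forall>j\<in>set js. \<forall>l\<in>set js. \<forall>y0\<in>RR S. \<not> cunit S e l (e l \<odot> y0 \<odot> e j \<odot> x \<odot> e l)"
    proof (intro ballI notI)
      fix j l y0 assume j: "j \<in> set js" and l: "l \<in> set js" and y0: "y0 \<in> RR S"
        and cu: "cunit S e l (e l \<odot> y0 \<odot> e j \<odot> x \<odot> e l)"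
      have jn: "j < n" and ln: "l < n" and lJ: "l \<in> J" using j l unfolding js_def by auto
      obtain d2 where d2: "univ XX C S d2" "{i. i < n \<and> push K (e i) d2 \<noteq> ezero K C S} = J - {l}"
        using reduce[OF oS e_def D L XO C u ln xR px jn y0 cu] unfolding J_def by blast
      have fin: "finite J" unfolding J_def by simp
      have "\<mu> d2 < \<mu> \<delta>" unfolding \<mu>_def using d2(2) J_def[symmetric] card_Diff1_less[OF fin lJ] by simp
      thus False using mn[OF d2(1)] by simp
    qed
    obtain g where g: "g \<in> RR S" "g = f \<boxplus> x \<odot> g" "g \<odot> f = g"
      using RL[OF oS HJ xR fxf[unfolded f_def] rad] unfolding f_def[symmetric] by blast
    have ffI: "f \<odot> f = f" unfolding f_def using FF_idem2[OF oS HJ] .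
    have fx: "f \<odot> x = x"
    proof -
      have "f \<odot> x = f \<odot> (f \<odot> x \<odot> f)" using fxf by simp
      also have "\<dots> = f \<odot> x \<odot> f" using ext[OF oS ffI] fR xR r_mul[OF oS] by simp
      finally show ?thesis using fxf by simp
    qed
    have fg: "f \<odot> g = g"
    proof -
      have "f \<odot> g = f \<odot> (f \<boxplus> x \<odot> g)" using g(2) by (rule arg_cong)
      also have "\<dots> = f \<boxplus> x \<odot> g" using r_dl[OF oS fR(1) fR(1) r_mul[OF oS xR g(1)]] ffI ext[OF oS fx] fR xR g(1) r_mul[OF oS] by simp
      finally show ?thesis using g(2) by simp
    qed
    have yg: "y \<odot> g = f"
    proof -
      have "(x \<boxplus> y) \<odot> g = f \<odot> g" using xy by simp
      hence "x \<odot> g \<boxplus> y \<odot> g = g" using fg r_dr[OF oS xR yR g(1)] by simp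
      hence "y \<odot> g \<boxplus> x \<odot> g = f \<boxplus> x \<odot> g" using g(2) r_comm[OF oS r_mul[OF oS xR g(1)] r_mul[OF oS yR g(1)]] by simp
      thus ?thesis using r_cancel[OF oS r_mul[OF oS yR g(1)] fR(1) r_mul[OF oS xR g(1)]] by simp
    qed
    define \<rho> where "\<rho> = cmp K q (cmp K g i)"
    have gi: "cmp K g i \<in> Hom K T S" using comp[OF oT oS oS Tq(2) g(1)] .
    have rR: "\<rho> \<in> Hom K T T" unfolding \<rho>_def using comp[OF oT oS oT gi Tq(3)] .
    have qy: "cmp K q y = cmp K \<phi> q" unfolding y_def
      using assoc[OF oS oT oS oT pq Tq(2) Tq(3)] Tq(4) idl[OF oS oT pq] by simp
    have "cmp K \<phi> \<rho> = cmp K (cmp K \<phi> q) (cmp K g i)" unfolding \<rho>_def using assoc[OF oT oS oT oT gi Tq(3) ph] .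
    also have "\<dots> = cmp K (cmp K q y) (cmp K g i)" using qy by simp
    also have "\<dots> = cmp K q (cmp K y (cmp K g i))" using assoc[OF oT oS oS oT gi yR Tq(3)] by simp
    also have "cmp K y (cmp K g i) = cmp K f i" using assoc[OF oT oS oS oS Tq(2) g(1) yR] yg by simp
    also have "cmp K f i = i" using Tq(5) f_def assoc[OF oT oS oT oS Tq(2) Tq(3) Tq(2)] Tq(4) idr[OF oT oS Tq(2)] by simp
    finally have "cmp K \<phi> \<rho> = idm K T" using Tq(4) by simp
    thus "\<exists>\<rho>\<in>Hom K T T. cmp K \<phi> \<rho> = idm K T" using rR by blast
  qed
  show ?thesis using TX U MIN by blast
qed

end

context gc begin

lemma part1:
  assumes KS: "krull_schmidt K" and EP: "enough_proj K"
  shows "\<forall>XX. subcat K XX \<and> cov_finite K XX \<and> ext_closed K XX \<and> summand_closed K XX \<longrightarrow>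
            (\<forall>C\<in>Ob K. \<exists>X Y x y d. X \<in> XX \<and> Y \<in> perpL K XX \<and> etri K X Y C x y d
                \<and> right_approx K (perpL K XX) C Y y)"
proof (intro allI impI ballI)
  fix XX C assume XXa: "subcat K XX \<and> cov_finite K XX \<and> ext_closed K XX \<and> summand_closed K XX" and C: "C \<in> Ob K"
  have XO: "XX \<subseteq> Ob K" and cf: "cov_finite K XX" and ec: "ext_closed K XX" and sc: "summand_closed K XX"
    using XXa unfolding subcat_def by auto
  obtain A P x0 p0 d0 where t: "etri K A P C x0 p0 d0" and P: "projective K P" using EP C unfolding enough_proj_def by blast
  have oA: "ob A" and d0: "d0 \<in> Ext K C A" using R1[OF t] by auto
  obtain XA a where la: "left_approx K XX A XA a" using cf oA unfolding cov_finite_def by blast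
  have XA: "XA \<in> XX" "a \<in> Hom K A XA" "\<forall>X'\<in>XX. \<forall>g\<in>Hom K A X'. \<exists>h\<in>Hom K XA X'. cmp K h a = g"
    using la unfolding left_approx_def by auto
  have oXA: "ob XA" using XA(1) XO by auto
  define \<delta>0 where "\<delta>0 = push K a d0"
  have u0: "univ XX C XA \<delta>0" unfolding univ_def
  proof (intro conjI ballI)
    show "\<delta>0 \<in> Ext K C XA" unfolding \<delta>0_def using push_in[OF C oA oXA XA(2) d0] .
    fix X' \<epsilon> assume X': "X' \<in> XX" and e: "\<epsilon> \<in> Ext K C X'"
    have oX: "ob X'" using X' XO by auto
    obtain g where g: "g \<in> Hom K A X'" "push K g d0 = \<epsilon>" using univ_proj[OF t P oX e] by blast
    obtain h where h: "h \<in> Hom K XA X'" "cmp K h a = g" using XA(3) X' g(1) by blast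
    have "\<epsilon> = push K h \<delta>0" unfolding \<delta>0_def using push_cmp[OF C oA oXA oX XA(2) h(1) d0] h(2) g(2) by simp
    then show "\<exists>h\<in>Hom K XA X'. \<epsilon> = push K h \<delta>0" using h(1) by blast
  qed
  obtain n Bs incl prj where D: "dsum_decomp K XA n Bs incl prj" and L: "\<forall>i<n. local_obj K (Bs i)"
    using KS oXA unfolding krull_schmidt_def by blast
  obtain T \<delta>' where T: "T \<in> XX" "univ XX C T \<delta>'"
    and mi: "\<forall>\<phi>\<in>Hom K T T. push K \<phi> \<delta>' = \<delta>' \<longrightarrow> (\<exists>\<rho>\<in>Hom K T T. cmp K \<phi> \<rho> = idm K T)"
    using minimal[OF D L XO sc XA(1) C u0] by blast
  have d': "\<delta>' \<in> Ext K C T" "\<forall>X'\<in>XX. \<forall>\<epsilon>\<in>Ext K C X'. \<exists>h\<in>Hom K T X'. \<epsilon> = push K h \<delta>'"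
    using T(2) unfolding univ_def by auto
  obtain Y x y where "Y \<in> perpL K XX" "etri K T Y C x y \<delta>'" "right_approx K (perpL K XX) C Y y"
    using main_tri[OF ec XO T(1) C d'(1) d'(2) mi] by blast
  then show "\<exists>X Y x y d. X \<in> XX \<and> Y \<in> perpL K XX \<and> etri K X Y C x y d \<and> right_approx K (perpL K XX) C Y y"
    using T(1) by blast
qed

end


definition opK :: "('o, 'm, 'e) extri \<Rightarrow> ('o, 'm, 'e) extri" where
  "opK K = K\<lparr>Hom := (\<lambda>A B. Hom K B A), cmp := (\<lambda>g f. cmp K f g), mzero := (\<lambda>A B. mzero K B A),
     Ext := (\<lambda>C A. Ext K A C), ezero := (\<lambda>C A. ezero K A C), push := pull K, pull := push K,
     etri := (\<lambda>A B C x y d. etri K C B A y x d)\<rparr>"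

lemma opsel[simp]: "Ob (opK K) = Ob K" "Hom (opK K) A B = Hom K B A" "cmp (opK K) g f = cmp K f g"
  "idm (opK K) = idm K" "madd (opK K) = madd K" "mzero (opK K) A B = mzero K B A" "mneg (opK K) = mneg K"
  "Ext (opK K) C A = Ext K A C" "eadd (opK K) = eadd K" "ezero (opK K) C A = ezero K A C" "eneg (opK K) = eneg K"
  "push (opK K) = pull K" "pull (opK K) = push K" "etri (opK K) A B C x y d = etri K C B A y x d"
  unfolding opK_def by simp_all

lemma gc_ext: assumes "extriangulated K" shows "gc K"
proof -
  have a: "additive K" "biadditive_E K" "realization K" "ET3op K" "ET4op K"
    using assms unfolding extriangulated_def by auto
  note r = a(3)[unfolded realization_def]
  have ad: "preadditive K" "\<exists>Z. is_zero_obj K Z" "\<forall>A\<in>Ob K. \<forall>B\<in>Ob K. \<exists>S i1 i2 p1 p2. is_biprod K A B S i1 i2 p1 p2"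
    using a(1) unfolding additive_def by auto
  show ?thesis
  proof
    show "preadditive K" by (rule ad(1))
    show "\<exists>Z. is_zero_obj K Z" by (rule ad(2))
    show "\<forall>A\<in>Ob K. \<forall>B\<in>Ob K. \<exists>S i1 i2 p1 p2. is_biprod K A B S i1 i2 p1 p2" by (rule ad(3))
    show "biadditive_E K" by (rule a(2))
    show "ET3op K" by (rule a(4))
    show "ET4op K" by (rule a(5))
    fix A B C x y d
    assume "etri K A B C x y d" then show "A \<in> Ob K \<and> B \<in> Ob K \<and> C \<in> Ob K \<and> x \<in> Hom K A B \<and> y \<in> Hom K B C \<and> d \<in> Ext K C A"
      using r[THEN conjunct1] by blast
  next
    fix A C d assume "A \<in> Ob K" "C \<in> Ob K" "d \<in> Ext K C A"
    then show "\<exists>B x y. etri K A B C x y d" using r[THEN conjunct2, THEN conjunct1] by blast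
  next
    fix A B C x y d A' B' C' x' y' d' a c
    assume "etri K A B C x y d" "etri K A' B' C' x' y' d'" "a \<in> Hom K A A'" "c \<in> Hom K C C'" "push K a d = pull K c d'"
    then show "\<exists>b\<in>Hom K B B'. cmp K b x = cmp K x' a \<and> cmp K y' b = cmp K c y"
      using r[THEN conjunct2, THEN conjunct2, THEN conjunct2, THEN conjunct1] by blast
  next
    fix A C S i1 i2 p1 p2 assume "is_biprod K A C S i1 i2 p1 p2"
    then show "etri K A S C i1 p2 (ezero K C A)"
      using r[THEN conjunct2, THEN conjunct2, THEN conjunct2, THEN conjunct2, THEN conjunct1] by blast
  qed
qed

context gc begin

lemma pre_op: "preadditive (opK K)"
  unfolding preadditive_def opsel
  apply (intro conjI ballI)
  apply (rule comp; assumption)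
  apply (rule idin; assumption)
  apply (rule idl; assumption)
  apply (rule idr; assumption)
  apply (rule assoc[symmetric]; assumption)
  apply (rule hg; assumption)
  apply (rule distr; assumption)
  apply (rule distl; assumption)
  done

end


context gc begin
lemma pull_madd: "ob C \<Longrightarrow> ob C' \<Longrightarrow> ob A \<Longrightarrow> c \<in> Hom K C' C \<Longrightarrow> c' \<in> Hom K C' C \<Longrightarrow> d \<in> Ext K C A \<Longrightarrow>
        pull K (madd K c c') d = eadd K (pull K c d) (pull K c' d)"
  using bia[unfolded biadditive_E_def, THEN conjunct2, THEN conjunct2, THEN conjunct2, THEN conjunct2, THEN conjunct2,
      THEN conjunct2, THEN conjunct2, THEN conjunct2, THEN conjunct2, THEN conjunct2] by blast

lemma bia_op: "biadditive_E (opK K)"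
  unfolding biadditive_E_def opsel
  apply (intro conjI ballI)
  apply (rule eg; assumption)
  apply (rule pull_in; assumption)
  apply (rule push_in; assumption)
  apply (rule pull_id; assumption)
  apply (rule push_id; assumption)
  apply (rule pull_cmp; assumption)
  apply (rule push_cmp; assumption)
  apply (rule push_pull[symmetric]; assumption)
  apply (rule pull_eadd; assumption)
  apply (rule pull_madd; assumption)
  apply (rule push_eadd; assumption)
  apply (rule push_madd; assumption)
  done

lemma biprod_op: "is_biprod (opK K) A B S i1 i2 p1 p2 \<longleftrightarrow> is_biprod K A B S p1 p2 i1 i2"
  unfolding is_biprod_def opsel by auto

lemma biprod_sym: "is_biprod K A B S i1 i2 p1 p2 \<Longrightarrow> is_biprod K B A S i2 i1 p2 p1"
  unfolding is_biprod_def using hgf(4)[of S S] comp by (auto simp: Let_def)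

end

lemma gc_op: assumes E: "extriangulated K" shows "gc (opK K)"
proof -
  interpret g: gc K using gc_ext[OF E] .
  have e34: "ET3 K" "ET4 K" using E unfolding extriangulated_def by auto
  show ?thesis
  proof
    show "preadditive (opK K)" by (rule g.pre_op)
    obtain Z where "is_zero_obj K Z" using g.zex by blast
    then have "is_zero_obj (opK K) Z" unfolding is_zero_obj_def by simp
    then show "\<exists>Z. is_zero_obj (opK K) Z" by blast
    show "\<forall>A\<in>Ob (opK K). \<forall>B\<in>Ob (opK K). \<exists>S i1 i2 p1 p2. is_biprod (opK K) A B S i1 i2 p1 p2"
      unfolding g.biprod_op using g.bipx by simp blast
    show "biadditive_E (opK K)" by (rule g.bia_op)
    show "ET3op (opK K)" unfolding ET3op_def opsel
    proof (intro allI impI)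
      fix A B C x y d A' B' C' x' y' d' b c
      assume a: "etri K C B A y x d" "etri K C' B' A' y' x' d'" "b \<in> Hom K B' B" "c \<in> Hom K C' C" "cmp K y c = cmp K b y'"
      from e34(1)[unfolded ET3_def, rule_format, of C' B' A' y' x' d' C B A y x d c b, OF a(2) a(1) a(4) a(3) a(5)[symmetric]]
      show "\<exists>aa\<in>Hom K A' A. cmp K aa x' = cmp K x b \<and> pull K aa d = push K c d'" by metis
    qed
    show "ET4op (opK K)" unfolding ET4op_def opsel
    proof (intro allI impI)
      fix A B C D F f f' g g' d d'
      assume a: "etri K B A D f f' d" "etri K C B F g g' d'"
      from e34(2)[unfolded ET4_def, rule_format, OF a(2) a(1)] obtain E h h' dd e d'' where
        r: "E \<in> Ob K" "h \<in> Hom K C A" "h' \<in> Hom K A E" "dd \<in> Hom K F E" "e \<in> Hom K E D"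
           "h = cmp K f g" "cmp K h' f = cmp K dd g'" "cmp K e h' = f'"
           "etri K C A E h h' d''" "etri K F E D dd e (push K g' d)"
           "pull K dd d'' = d'" "push K g d'' = pull K e d" by blast
      show "\<exists>E h h' dd e d''. E \<in> Ob K \<and> h \<in> Hom K C A \<and> h' \<in> Hom K A E \<and> dd \<in> Hom K E D \<and> e \<in> Hom K F E \<and>
           cmp K dd h' = f' \<and> cmp K h' f = cmp K e g' \<and> h = cmp K f g \<and> etri K C A E h h' d'' \<and>
           etri K F E D e dd (push K g' d) \<and> d' = pull K e d'' \<and> pull K dd d = push K g d''"
        apply (rule exI[of _ E], rule exI[of _ h], rule exI[of _ h'], rule exI[of _ e], rule exI[of _ dd], rule exI[of _ d''])
        using r by simp
    qed
    fix A B C x y d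
    assume "etri (opK K) A B C x y d" then show "A \<in> Ob (opK K) \<and> B \<in> Ob (opK K) \<and> C \<in> Ob (opK K)
        \<and> x \<in> Hom (opK K) A B \<and> y \<in> Hom (opK K) B C \<and> d \<in> Ext (opK K) C A"
      using g.R1 by simp
  next
    fix A C d assume "A \<in> Ob (opK K)" "C \<in> Ob (opK K)" "d \<in> Ext (opK K) C A"
    then show "\<exists>B x y. etri (opK K) A B C x y d" using g.R2 by simp blast
  next
    fix A B C x y d A' B' C' x' y' d' a c
    assume "etri (opK K) A B C x y d" "etri (opK K) A' B' C' x' y' d'" "a \<in> Hom (opK K) A A'" "c \<in> Hom (opK K) C C'"
      "push (opK K) a d = pull (opK K) c d'"
    then show "\<exists>b\<in>Hom (opK K) B B'. cmp (opK K) b x = cmp (opK K) x' a \<and> cmp (opK K) y' b = cmp (opK K) c y"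
      using g.R4[of C' B' A' y' x' d' C B A y x d c a] by simp metis
  next
    fix A C S i1 i2 p1 p2 assume "is_biprod (opK K) A C S i1 i2 p1 p2"
    then show "etri (opK K) A S C i1 p2 (ezero (opK K) C A)"
      using g.R5[OF g.biprod_sym] unfolding g.biprod_op by simp
  qed
qed



lemma iso_op: "Defs.iso (opK K) A A f \<longleftrightarrow> Defs.iso K A A f"
  unfolding iso_def opsel by auto

lemma iso_op2: "Defs.iso (opK K) A B f \<Longrightarrow> \<exists>g. Defs.iso K A B g"
  unfolding iso_def opsel by blast

lemma zero_op: "is_zero_obj (opK K) Z \<longleftrightarrow> is_zero_obj K Z"
  unfolding is_zero_obj_def opsel by auto

lemma biprod_op': "is_biprod (opK K) A B S i1 i2 p1 p2 \<longleftrightarrow> is_biprod K A B S p1 p2 i1 i2"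
  unfolding is_biprod_def opsel by auto

lemma subcat_op: assumes s: "subcat K Y" shows "subcat (opK K) Y"
proof -
  have a: "Y \<subseteq> Ob K" "\<And>A B f. A \<in> Y \<Longrightarrow> Defs.iso K A B f \<Longrightarrow> B \<in> Y" "\<And>Z. is_zero_obj K Z \<Longrightarrow> Z \<in> Y"
    "\<And>A B T i1 i2 p1 p2. A \<in> Y \<Longrightarrow> B \<in> Y \<Longrightarrow> is_biprod K A B T i1 i2 p1 p2 \<Longrightarrow> T \<in> Y"
    using s unfolding subcat_def by blast+
  have b: "\<And>A B f. A \<in> Y \<Longrightarrow> Defs.iso (opK K) A B f \<Longrightarrow> B \<in> Y"
  proof -
    fix A B f assume A: "A \<in> Y" and i: "Defs.iso (opK K) A B f"
    obtain g where "Defs.iso K A B g" using iso_op2[OF i] by blast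
    then show "B \<in> Y" using a(2) A by blast
  qed
  show ?thesis unfolding subcat_def zero_op biprod_op' opsel using a(1,3,4) b by blast
qed

lemma cov_op: "contra_finite K Y \<Longrightarrow> cov_finite (opK K) Y"
  unfolding contra_finite_def cov_finite_def left_approx_def right_approx_def opsel by simp

lemma ext_op: "ext_closed K Y \<Longrightarrow> ext_closed (opK K) Y"
  unfolding ext_closed_def opsel by blast

lemma sum_op: "summand_closed K Y \<Longrightarrow> summand_closed (opK K) Y"
  unfolding summand_closed_def biprod_op' by blast

lemma perp_op: "perpL (opK K) Y = perpR K Y"
  unfolding perpL_def perpR_def opsel by simp

lemma rapprox_op: "right_approx (opK K) S C Y y \<longleftrightarrow> left_approx K S C Y y"
  unfolding right_approx_def left_approx_def opsel by simp

lemma ks_op: "krull_schmidt K \<Longrightarrow> krull_schmidt (opK K)"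
  unfolding krull_schmidt_def
proof (intro ballI)
  fix A assume KS: "\<forall>A\<in>Ob K. \<exists>n Bs incl prj. dsum_decomp K A n Bs incl prj \<and> (\<forall>i<n. local_obj K (Bs i))"
    and A: "A \<in> Ob (opK K)"
  obtain n Bs incl prj where D: "dsum_decomp K A n Bs incl prj" and L: "\<forall>i<n. local_obj K (Bs i)"
    using KS A by auto
  have "dsum_decomp (opK K) A n Bs prj incl"
    using D unfolding dsum_decomp_def msum_def opsel by auto
  moreover have "\<forall>i<n. local_obj (opK K) (Bs i)" using L unfolding local_obj_def iso_op opsel by auto
  ultimately show "\<exists>n Bs incl prj. dsum_decomp (opK K) A n Bs incl prj \<and> (\<forall>i<n. local_obj (opK K) (Bs i))" by blast
qed

lemma ep_op: "enough_inj K \<Longrightarrow> enough_proj (opK K)"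
  unfolding enough_inj_def enough_proj_def injective_def projective_def opsel by blast

theorem corollary3p3:
  fixes K :: "('o, 'm, 'e) extri"
  assumes "extriangulated K" and "krull_schmidt K" and "enough_proj K" and "enough_inj K"
  shows "(\<forall>\<X>. subcat K \<X> \<and> cov_finite K \<X> \<and> ext_closed K \<X> \<and> summand_closed K \<X> \<longrightarrow>
            (\<forall>C\<in>Ob K. \<exists>X Y x y d. X \<in> \<X> \<and> Y \<in> perpL K \<X> \<and> etri K X Y C x y d
                \<and> right_approx K (perpL K \<X>) C Y y))
       \<and> (\<forall>\<Y>. subcat K \<Y> \<and> contra_finite K \<Y> \<and> ext_closed K \<Y> \<and> summand_closed K \<Y> \<longrightarrow>
            (\<forall>C\<in>Ob K. \<exists>X Y x y d. X \<in> perpR K \<Y> \<and> Y \<in> \<Y> \<and> etri K C X Y x y d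
                \<and> left_approx K (perpR K \<Y>) C X x))"
proof -
  interpret g: gc K using gc_ext[OF assms(1)] .
  interpret go: gc "opK K" using gc_op[OF assms(1)] .
  have P1: "\<forall>\<X>. subcat K \<X> \<and> cov_finite K \<X> \<and> ext_closed K \<X> \<and> summand_closed K \<X> \<longrightarrow>
            (\<forall>C\<in>Ob K. \<exists>X Y x y d. X \<in> \<X> \<and> Y \<in> perpL K \<X> \<and> etri K X Y C x y d
                \<and> right_approx K (perpL K \<X>) C Y y)" using g.part1[OF assms(2,3)] .
  have P2: "\<forall>\<X>. subcat (opK K) \<X> \<and> cov_finite (opK K) \<X> \<and> ext_closed (opK K) \<X> \<and> summand_closed (opK K) \<X> \<longrightarrow>
            (\<forall>C\<in>Ob (opK K). \<exists>X Y x y d. X \<in> \<X> \<and> Y \<in> perpL (opK K) \<X> \<and> etri (opK K) X Y C x y d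
                \<and> right_approx (opK K) (perpL (opK K) \<X>) C Y y)"
    using go.part1[OF ks_op[OF assms(2)] ep_op[OF assms(4)]] .
  show ?thesis
  proof (intro conjI P1 allI impI ballI)
    fix YY C assume a: "subcat K YY \<and> contra_finite K YY \<and> ext_closed K YY \<and> summand_closed K YY" and C: "C \<in> Ob K"
    have "subcat (opK K) YY \<and> cov_finite (opK K) YY \<and> ext_closed (opK K) YY \<and> summand_closed (opK K) YY"
      using a subcat_op cov_op ext_op sum_op by blast
    then obtain X Y x y d where r: "X \<in> YY" "Y \<in> perpR K YY" "etri K C Y X y x d" "left_approx K (perpR K YY) C Y y"
      using P2 C unfolding perp_op rapprox_op opsel by blast
    then show "\<exists>X Y x y d. X \<in> perpR K YY \<and> Y \<in> YY \<and> etri K C X Y x y d \<and> left_approx K (perpR K YY) C X x"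
      by blast
  qed
qed

end
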